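(* Assume $\frac32<\gamma<2$ and $\Delta t=\Delta x=h$. There exists a constant $C>0$, depending only on $L,T,\mu,a,\gamma,\varrho_0,u_0$ and not on $h$ or the choice of numerical solution, such that for every numerical solution and every $m=1,\dots,M$, $$|E_1^m|\le C\,h^{\frac{2\gamma-3}{2\gamma}},$$ where $$E_1^m:=-\Delta t\,\Delta x\sum_{k=1}^m\sum_{i=0}^{N-2}\operatorname{Up}(\varrho^ku^k)_{i+1/2}\Big(\frac{\varrho_i^k\widehat u_i^k+\varrho_{i+1}^k\widehat u_{i+1}^k}{2}-\frac{\varrho_i^{k-1}\widehat u_i^{k-1}+\varrho_{i+1}^{k-1}\widehat u_{i+1}^{k-1}}{2}\Big).$$
   Context: Fix $L>0$, $\mu>0$, $a>0$, $p(\varrho)=a\varrho^\gamma$, $T>0$, integers $N,M\ge1$, $\Delta x=L/N<1$, $\Delta t=T/M<1$. Nodes $x_{i-1/2}=i\Delta x$ ($i=0,\dots,N$). Unknowns $\varrho_i^k$ ($i=0,\dots,N-1$), $u^k_{i-1/2}$ ($i=0,\dots,N$), $k=0,\dots,M$, with $u^k_{-1/2}=u^k_{N-1/2}=0$ for $k\ge1$. Notation: $z^+=\max\{z,0\}$, $z^-=\min\{z,0\}$; $\widehat u_i=\frac{u_{i-1/2}+u_{i+1/2}}2$; for $i=0,\dots,N-2$, $\operatorname{Up}(\varrho u)_{i+1/2}=\varrho_iu^+_{i+1/2}+\varrho_{i+1}u^-_{i+1/2}$, $\operatorname{Up}(\varrho\widehat uu)_{i+1/2}=\varrho_i\widehat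 u_iu^+_{i+1/2}+\varrho_{i+1}\widehat u_{i+1}u^-_{i+1/2}$, both fluxes vanishing at nodes $-1/2$, $N-1/2$; $\partial_{i+1/2}f=(f_{i+1}-f_i)/\Delta x$, $\partial_iv=(v_{i+1/2}-v_{i-1/2})/\Delta x$, $\Delta_{i+1/2}u=(u_{i-1/2}-2u_{i+1/2}+u_{i+3/2})/\Delta x^2$, $\partial_t^kf=(f^k-f^{k-1})/\Delta t$. Initial data $\varrho_0\in L^\gamma(0,L)$, $\varrho_0>0$, $u_0$ bounded on $[0,L]$; $\varrho_i^0=\frac1{\Delta x}\int_{x_{i-1/2}}^{x_{i+1/2}}\varrho_0$, $u^0_{i-1/2}=u_0(x_{i-1/2})$. Scheme for $k=1,\dots,M$: $\partial_t^k\varrho_i+\partial_i\operatorname{Up}(\varrho^ku^k)=0$ ($i=0,\dots,N-1$); $\partial_t^k\big(\frac{\varrho_i\widehat u_i+\varrho_{i+1}\widehat u_{i+1}}2\big)+\frac{\operatorname{Up}(\varrho^k\widehat u^ku^k)_{i+3/2}-\operatorname{Up}(\varrho^k\widehat u^ku^k)_{i-1/2}}{2\Delta x}=\mu\Delta_{i+1/2}u^k-\partial_{i+1/2}p(\varrho^k)$ ($i=0,\dots,N-2$). A numerical solution is any solution of this system (its densities are positive). *)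

theory Defs
  imports "HOL-Analysis.Analysis"
begin

text \<open>Discretization conventions.
  Densities: rho k i = rho_i^k (cells i = 0..N-1).
  Velocities: u k j = u^k_{j-1/2} (nodes j = 0..N), i.e. node x_{j-1/2} = j * dx.\<close>

definition ppart :: "real \<Rightarrow> real" where "ppart z = max z 0"
definition npart :: "real \<Rightarrow> real" where "npart z = min z 0"

definition pressure :: "real \<Rightarrow> real \<Rightarrow> real \<Rightarrow> real" where
  "pressure a gam r = a * r powr gam"

definition uhat :: "(nat \<Rightarrow> nat \<Rightarrow> real) \<Rightarrow> nat \<Rightarrow> nat \<Rightarrow> real" where
  "uhat u k i = (u k i + u k (Suc i)) / 2"

text \<open>Upwind mass flux at node j (position x_{j-1/2}); for j = i+1 it is Up(rho u)_{i+1/2};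
  it vanishes at the boundary nodes j = 0 and j = N.\<close>
definition UpM :: "nat \<Rightarrow> (nat \<Rightarrow> nat \<Rightarrow> real) \<Rightarrow> (nat \<Rightarrow> nat \<Rightarrow> real) \<Rightarrow> nat \<Rightarrow> nat \<Rightarrow> real" where
  "UpM N rho u k j =
     (if 1 \<le> j \<and> j \<le> N - 1
      then rho k (j - 1) * ppart (u k j) + rho k j * npart (u k j) else 0)"

definition UpQ :: "nat \<Rightarrow> (nat \<Rightarrow> nat \<Rightarrow> real) \<Rightarrow> (nat \<Rightarrow> nat \<Rightarrow> real) \<Rightarrow> nat \<Rightarrow> nat \<Rightarrow> real" where
  "UpQ N rho u k j =
     (if 1 \<le> j \<and> j \<le> N - 1
      then rho k (j - 1) * uhat u k (j - 1) * ppart (u k j) + rho k j * uhat u k j * npart (u k j)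
      else 0)"

definition qmom :: "(nat \<Rightarrow> nat \<Rightarrow> real) \<Rightarrow> (nat \<Rightarrow> nat \<Rightarrow> real) \<Rightarrow> nat \<Rightarrow> nat \<Rightarrow> real" where
  "qmom rho u k i = (rho k i * uhat u k i + rho k (Suc i) * uhat u k (Suc i)) / 2"

definition numsol ::
  "real \<Rightarrow> real \<Rightarrow> real \<Rightarrow> real \<Rightarrow> real \<Rightarrow> (real \<Rightarrow> real) \<Rightarrow> (real \<Rightarrow> real) \<Rightarrow> nat \<Rightarrow> nat
   \<Rightarrow> (nat \<Rightarrow> nat \<Rightarrow> real) \<Rightarrow> (nat \<Rightarrow> nat \<Rightarrow> real) \<Rightarrow> bool" where
  "numsol L T mu a gam rho0 u0 N M rho u \<longleftrightarrow>
     (let dx = L / real N; dt = T / real M in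
      (\<forall>i<N. rho 0 i = (1 / dx) * (LBINT x = real i * dx..real (Suc i) * dx. rho0 x)) \<and>
      (\<forall>j\<le>N. u 0 j = u0 (real j * dx)) \<and>
      (\<forall>k\<in>{1..M}. u k 0 = 0 \<and> u k N = 0) \<and>
      (\<forall>k\<in>{0..M}. \<forall>i<N. rho k i > 0) \<and>
      (\<forall>k\<in>{1..M}. \<forall>i<N.
          (rho k i - rho (k - 1) i) / dt + (UpM N rho u k (Suc i) - UpM N rho u k i) / dx = 0) \<and>
      (\<forall>k\<in>{1..M}. \<forall>i<N - 1.
          (qmom rho u k i - qmom rho u (k - 1) i) / dt
          + (UpQ N rho u k (i + 2) - UpQ N rho u k i) / (2 * dx)
          = mu * (u k i - 2 * u k (Suc i) + u k (i + 2)) / dx\<^sup>2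
            - (pressure a gam (rho k (Suc i)) - pressure a gam (rho k i)) / dx))"

definition E1 :: "real \<Rightarrow> real \<Rightarrow> nat \<Rightarrow> (nat \<Rightarrow> nat \<Rightarrow> real) \<Rightarrow> (nat \<Rightarrow> nat \<Rightarrow> real) \<Rightarrow> nat \<Rightarrow> real" where
  "E1 dt dx N rho u m =
     - dt * dx * (\<Sum>k\<in>{1..m}. \<Sum>i<N - 1.
          UpM N rho u k (Suc i) * (qmom rho u k i - qmom rho u (k - 1) i))"

end

theory Submission
  imports Defs
begin

lemma sumL1:
  fixes a G :: "nat \<Rightarrow> real"
  shows "(\<Sum>i<n. a (i+1) * (G i + G (i+1))) = (\<Sum>j<Suc n. (a j + a (j+1)) * G j) - a 0 * G 0 - a (Suc n) * G n"
  by (induction n) (simp_all add: algebra_simps)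

lemma sumL2:
  fixes a Q :: "nat \<Rightarrow> real"
  shows "(\<Sum>i<n. a (i+1) * (Q (i+2) - Q i)) = (\<Sum>j<Suc n. (a j + a (j+1)) * (Q (j+1) - Q j)) - a 0 * (Q 1 - Q 0) - a (n+1) * (Q (n+1) - Q n)"
  by (induction n) (simp_all add: algebra_simps)

lemma sumL3:
  fixes a :: "nat \<Rightarrow> real"
  shows "(\<Sum>i<n. a (i+1) * (a i - 2 * a (i+1) + a (i+2))) = - (\<Sum>j<Suc n. (a (j+1) - a j)^2) - a 0 * (a 1 - a 0) + a (n+1) * (a (n+1) - a n)"
  by (induction n) (simp_all add: algebra_simps power2_eq_square)

lemma abel:
  fixes a G :: "nat \<Rightarrow> real"
  shows "(\<Sum>j<n. a j * (G (j+1) - G j)) = a n * G n - a 0 * G 0 - (\<Sum>j<n. G (j+1) * (a (j+1) - a j))"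
  by (induction n) (simp_all add: algebra_simps)

lemma sum_shift_le:
  fixes f :: "nat \<Rightarrow> real"
  assumes "\<And>j. j < N \<Longrightarrow> f j \<ge> 0" "n \<le> N"
  shows "(\<Sum>j<n - 1. f (j+1)) \<le> (\<Sum>j<N. f j)"
proof -
  have "(\<Sum>j<n - 1. f (j+1)) = (\<Sum>j\<in>Suc ` {..<n-1}. f j)"
    by (simp add: sum.reindex)
  also have "\<dots> \<le> (\<Sum>j<N. f j)"
    by (rule sum_mono2) (use assms in auto)
  finally show ?thesis .
qed

lemma sum_sub_le:
  fixes f :: "nat \<Rightarrow> real"
  assumes "\<And>j. j < N \<Longrightarrow> f j \<ge> 0" "n \<le> N"
  shows "(\<Sum>j<n. f j) \<le> (\<Sum>j<N. f j)"
  by (rule sum_mono2) (use assms in auto)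

lemma wCS:
  fixes w x y :: "nat \<Rightarrow> real"
  assumes "\<And>j. j \<in> A \<Longrightarrow> w j \<ge> 0"
  shows "(\<Sum>j\<in>A. w j * x j * y j)^2 \<le> (\<Sum>j\<in>A. w j * (x j)^2) * (\<Sum>j\<in>A. w j * (y j)^2)"
proof -
  have "(\<Sum>j\<in>A. (sqrt (w j) * x j) * (sqrt (w j) * y j))^2 \<le> (\<Sum>j\<in>A. (sqrt (w j) * x j)^2) * (\<Sum>j\<in>A. (sqrt (w j) * y j)^2)"
    by (rule Cauchy_Schwarz_ineq_sum)
  moreover have "(\<Sum>j\<in>A. (sqrt (w j) * x j) * (sqrt (w j) * y j)) = (\<Sum>j\<in>A. w j * x j * y j)"
    by (rule sum.cong) (use assms in \<open>auto simp: algebra_simps\<close>)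
  moreover have "(\<Sum>j\<in>A. (sqrt (w j) * x j)^2) = (\<Sum>j\<in>A. w j * (x j)^2)"
    by (rule sum.cong) (use assms in \<open>auto simp: power_mult_distrib\<close>)
  moreover have "(\<Sum>j\<in>A. (sqrt (w j) * y j)^2) = (\<Sum>j\<in>A. w j * (y j)^2)"
    by (rule sum.cong) (use assms in \<open>auto simp: power_mult_distrib\<close>)
  ultimately show ?thesis by simp
qed

lemma tele_sq:
  fixes u :: "nat \<Rightarrow> real"
  assumes "u 0 = 0" "n \<le> N"
  shows "(u n)^2 \<le> real N * (\<Sum>m<N. (u (m+1) - u m)^2)"
proof -
  have "u n = (\<Sum>m<n. (u (m+1) - u m) * 1)"
    using assms(1) by (simp add: sum_lessThan_telescope)
  hence "(u n)^2 \<le> (\<Sum>m<n. (u (m+1) - u m)^2) * (\<Sum>m<n. 1^2)"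
    using Cauchy_Schwarz_ineq_sum[of "\<lambda>m. u (m+1) - u m" "\<lambda>_. 1" "{..<n}"] by simp
  also have "\<dots> \<le> (\<Sum>m<N. (u (m+1) - u m)^2) * real N"
    apply (rule mult_mono)
    using sum_sub_le[where f="\<lambda>m. (u (m+1) - u m)^2" and n=n and N=N] assms by (auto intro: sum_nonneg)
  finally show ?thesis by (simp add: mult.commute)
qed

lemma tangent_powr:
  fixes r s g :: real
  assumes "r \<ge> 0" "s > 0" "g \<ge> 1"
  shows "r powr g \<ge> s powr g + g * s powr (g - 1) * (r - s)"
proof (cases "r = 0")
  case True
  have "s powr (g - 1) * s = s powr g"
    using assms by (simp add: powr_diff field_simps)
  hence "g * s powr (g - 1) * (r - s) = - g * s powr g" using True by (simp add: algebra_simps)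
  moreover have "s powr g \<ge> 0" by simp
  ultimately show ?thesis using True assms by (simp add: algebra_simps)
next
  case False
  hence r: "r > 0" using assms by simp
  have "(\<lambda>x. x powr g) r - (\<lambda>x. x powr g) s \<ge> g * s powr (g - 1) * (r - s)"
  proof (rule convex_on_imp_above_tangent[where A="{0<..}"])
    show "convex_on {0<..} (\<lambda>x. x powr g)" using powr_convex assms by blast
    show "connected {0::real<..}" by simp
    show "s \<in> interior {0<..}" using assms by (simp add: interior_open)
    show "r \<in> {0<..}" using r by simp
    show "((\<lambda>x. x powr g) has_field_derivative g * s powr (g - 1)) (at s within {0<..})"
      using assms by (auto intro!: derivative_eq_intros)
  qed
  thus ?thesis by simp
qed

definition Pif :: "real \<Rightarrow> real \<Rightarrow> real \<Rightarrow> real" where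
  "Pif a g r = a / (g - 1) * r powr g"
definition dPi :: "real \<Rightarrow> real \<Rightarrow> real \<Rightarrow> real" where
  "dPi a g r = a / (g - 1) * g * r powr (g - 1)"

lemma Pi_tangent:
  assumes "r \<ge> 0" "s > 0" "g > 1" "a > 0"
  shows "Pif a g r \<ge> Pif a g s + dPi a g s * (r - s)"
proof -
  have "r powr g \<ge> s powr g + g * s powr (g - 1) * (r - s)"
    using tangent_powr assms by simp
  hence "a / (g - 1) * r powr g \<ge> a / (g - 1) * (s powr g + g * s powr (g - 1) * (r - s))"
    using assms by (intro mult_left_mono) auto
  moreover have "a / (g - 1) * (s powr g + g * s powr (g - 1) * (r - s)) = Pif a g s + dPi a g s * (r - s)"
  proof -
    have "\<And>c::real. c * (s powr g + g * s powr (g - 1) * (r - s)) = c * s powr g + c * g * s powr (g - 1) * (r - s)"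
      by (simp add: algebra_simps)
    thus ?thesis unfolding Pif_def dPi_def by blast
  qed
  ultimately show ?thesis unfolding Pif_def by simp
qed

lemma p_Pi:
  assumes "r > 0" "g > 1"
  shows "pressure a g r = r * dPi a g r - Pif a g r"
proof -
  have e: "r * r powr (g - 1) = r powr g" using assms by (simp add: powr_diff field_simps)
  have "r * dPi a g r = a / (g - 1) * g * r powr g"
    unfolding dPi_def using e by (metis mult.left_commute)
  moreover have "a / (g - 1) * g - a / (g - 1) = a"
  proof -
    have "a / (g - 1) * g - a / (g - 1) = a / (g - 1) * (g - 1)" by (simp add: right_diff_distrib)
    also have "\<dots> = a" using assms by simp
    finally show ?thesis .
  qed
  moreover have "\<And>c X::real. c * g * X - c * X = (c * g - c) * X" by (simp add: algebra_simps)
  ultimately show ?thesis unfolding pressure_def Pif_def by metis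
qed

lemma node_pressure:
  assumes x: "x > 0" and y: "y > 0" and g: "g > 1" and a: "a > 0"
  shows "(x * ppart v + y * npart v) * (dPi a g y - dPi a g x) \<le> v * (pressure a g y - pressure a g x)"
proof (cases "v \<ge> 0")
  case True
  have t: "Pif a g x \<ge> Pif a g y + dPi a g y * (x - y)" using Pi_tangent x y g a by simp
  have "x * (dPi a g y - dPi a g x) \<le> pressure a g y - pressure a g x"
    using t p_Pi[OF x g, of a] p_Pi[OF y g, of a] by (simp add: algebra_simps)
  hence "v * (x * (dPi a g y - dPi a g x)) \<le> v * (pressure a g y - pressure a g x)"
    using mult_left_mono True by blast
  thus ?thesis using True by (simp add: ppart_def npart_def max_def min_def algebra_simps)
next
  case False
  have t: "Pif a g y \<ge> Pif a g x + dPi a g x * (y - x)" using Pi_tangent x y g a by simp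
  have "y * (dPi a g y - dPi a g x) \<ge> pressure a g y - pressure a g x"
    using t p_Pi[OF x g, of a] p_Pi[OF y g, of a] by (simp add: algebra_simps)
  hence "v * (y * (dPi a g y - dPi a g x)) \<le> v * (pressure a g y - pressure a g x)"
    using False by (intro mult_left_mono_neg) auto
  thus ?thesis using False by (simp add: ppart_def npart_def max_def min_def algebra_simps)
qed

definition KE :: "nat \<Rightarrow> (nat \<Rightarrow> nat \<Rightarrow> real) \<Rightarrow> (nat \<Rightarrow> nat \<Rightarrow> real) \<Rightarrow> nat \<Rightarrow> real" where
  "KE N rho u k = (\<Sum>j<N. rho k j * (uhat u k j)^2)"
definition PE :: "real \<Rightarrow> real \<Rightarrow> nat \<Rightarrow> (nat \<Rightarrow> nat \<Rightarrow> real) \<Rightarrow> nat \<Rightarrow> real" where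
  "PE a g N rho k = (\<Sum>j<N. Pif a g (rho k j))"
definition Sd :: "nat \<Rightarrow> (nat \<Rightarrow> nat \<Rightarrow> real) \<Rightarrow> nat \<Rightarrow> real" where
  "Sd N u k = (\<Sum>j<N. (u k (Suc j) - u k j)^2)"
definition dd :: "nat \<Rightarrow> (nat \<Rightarrow> nat \<Rightarrow> real) \<Rightarrow> (nat \<Rightarrow> nat \<Rightarrow> real) \<Rightarrow> nat \<Rightarrow> real" where
  "dd N rho u k = (\<Sum>j<N. rho (k - 1) j * (uhat u k j - uhat u (k - 1) j)^2)"

lemma sumhalf:
  fixes c x y :: "nat \<Rightarrow> real"
  shows "(\<Sum>i\<in>A. c i * (x i / 2 + y i / 2)) = (\<Sum>i\<in>A. c i * x i) / 2 + (\<Sum>i\<in>A. c i * y i) / 2"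
  by (simp add: distrib_left sum.distrib sum_divide_distrib)

lemma sumlin:
  fixes c x y :: "nat \<Rightarrow> real"
  shows "(\<Sum>i\<in>A. c i * (m * x i - y i)) = m * (\<Sum>i\<in>A. c i * x i) - (\<Sum>i\<in>A. c i * y i)"
proof -
  have "(\<Sum>i\<in>A. c i * (m * x i - y i)) = (\<Sum>i\<in>A. m * (c i * x i) - c i * y i)"
    by (rule sum.cong) (simp_all add: algebra_simps)
  thus ?thesis by (simp add: sum_subtractf sum_distrib_left)
qed

lemma energy_step:
  fixes rho u :: "nat \<Rightarrow> nat \<Rightarrow> real" and k N :: nat and h mu a g :: real
  assumes N: "N \<ge> 1" and h: "h > 0" and mu: "mu > 0" and a: "a > 0" and g: "g > 1"
    and pos: "\<forall>i<N. rho k i > 0" and pos': "\<forall>i<N. rho (k - 1) i > 0"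
    and bc: "u k 0 = 0" "u k N = 0"
    and mass: "\<forall>i<N. (rho k i - rho (k - 1) i) / h + (UpM N rho u k (Suc i) - UpM N rho u k i) / h = 0"
    and mom: "\<forall>i<N - 1.
          (qmom rho u k i - qmom rho u (k - 1) i) / h
          + (UpQ N rho u k (i + 2) - UpQ N rho u k i) / (2 * h)
          = mu * (u k i - 2 * u k (Suc i) + u k (i + 2)) / h\<^sup>2
            - (pressure a g (rho k (Suc i)) - pressure a g (rho k i)) / h"
  shows "KE N rho u k / 2 + PE a g N rho k + mu / h * Sd N u k + dd N rho u k / 2
         \<le> KE N rho u (k - 1) / 2 + PE a g N rho (k - 1)"
proof -
  obtain n where Nn: "N = Suc n" using N by (cases N) auto
  define F where "F = UpM N rho u k"
  define Q where "Q = UpQ N rho u k"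
  define ub where "ub = uhat u k"
  define ub' where "ub' = uhat u (k - 1)"
  define r where "r = rho k"
  define r' where "r' = rho (k - 1)"
  define uu where "uu = u k"
  define p where "p = (\<lambda>i. pressure a g (r i))"
  define G where "G = (\<lambda>j. r j * ub j - r' j * ub' j)"
  have F0: "F 0 = 0" and FN: "F N = 0" unfolding F_def UpM_def using N by auto
  have Q0: "Q 0 = 0" and QN: "Q N = 0" unfolding Q_def UpQ_def using N by auto
  have ubd: "\<And>j. ub j = (uu j + uu (Suc j)) / 2" unfolding ub_def uu_def uhat_def by simp
  have uu0: "uu 0 = 0" and uuN: "uu N = 0" using bc unfolding uu_def by auto
  have massj: "\<And>j. j < N \<Longrightarrow> r j - r' j = - (F (Suc j) - F j)"
  proof -
    fix j assume "j < N"
    hence "(r j - r' j) / h + (F (Suc j) - F j) / h = 0" using mass unfolding r_def r'_def F_def by auto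
    hence "((r j - r' j) + (F (Suc j) - F j)) / h = 0" by (simp add: add_divide_distrib)
    thus "r j - r' j = - (F (Suc j) - F j)" using h by simp
  qed
  have momi: "\<And>i. i < n \<Longrightarrow> (G i + G (i+1)) / 2 + (Q (i+2) - Q i) / 2
        = mu / h * (uu i - 2 * uu (Suc i) + uu (i+2)) - (p (Suc i) - p i)"
  proof -
    fix i assume "i < n"
    hence e: "(qmom rho u k i - qmom rho u (k - 1) i) / h + (Q (i + 2) - Q i) / (2 * h)
          = mu * (uu i - 2 * uu (Suc i) + uu (i + 2)) / h\<^sup>2 - (p (Suc i) - p i) / h"
      using mom Nn unfolding Q_def uu_def p_def r_def by auto
    have qd: "qmom rho u k i - qmom rho u (k - 1) i = (G i + G (i+1)) / 2"
      unfolding qmom_def G_def r_def r'_def ub_def ub'_def by (simp add: field_simps)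
    have l: "\<And>A B. h * (A / h + B / (2 * h)) = A + B / 2" using h by (simp add: field_simps)
    have r: "\<And>D P. h * (mu * D / h\<^sup>2 - P / h) = mu / h * D - P" using h by (simp add: field_simps power2_eq_square)
    show "(G i + G (i+1)) / 2 + (Q (i+2) - Q i) / 2
        = mu / h * (uu i - 2 * uu (Suc i) + uu (i+2)) - (p (Suc i) - p i)"
      using arg_cong[OF e, of "\<lambda>x. h * x"] unfolding l r qd by simp
  qed
  have sumeq: "(\<Sum>i<n. uu (i+1) * ((G i + G (i+1)) / 2 + (Q (i+2) - Q i) / 2))
     = (\<Sum>i<n. uu (i+1) * (mu / h * (uu i - 2 * uu (Suc i) + uu (i+2)) - (p (Suc i) - p i)))"
    using momi by (intro sum.cong) auto
  have L: "(\<Sum>i<n. uu (i+1) * ((G i + G (i+1)) / 2 + (Q (i+2) - Q i) / 2))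
      = (\<Sum>i<n. uu (i+1) * (G i + G (i+1))) / 2 + (\<Sum>i<n. uu (i+1) * (Q (i+2) - Q i)) / 2"
    by (rule sumhalf)
  have ub2: "\<And>j. uu j + uu (j+1) = 2 * ub j" using ubd by (simp add: field_simps)
  have L1: "(\<Sum>i<n. uu (i+1) * (G i + G (i+1))) = (\<Sum>j<N. 2 * (ub j * G j))"
  proof -
    have "(\<Sum>j<Suc n. (uu j + uu (j+1)) * G j) = (\<Sum>j<N. 2 * (ub j * G j))"
      unfolding Nn ub2 by (simp add: mult.assoc)
    thus ?thesis using sumL1[of uu G n] uu0 uuN Nn by simp
  qed
  have L2: "(\<Sum>i<n. uu (i+1) * (Q (i+2) - Q i)) = (\<Sum>j<N. 2 * (ub j * (Q (j+1) - Q j)))"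
  proof -
    have "(\<Sum>j<Suc n. (uu j + uu (j+1)) * (Q (j+1) - Q j)) = (\<Sum>j<N. 2 * (ub j * (Q (j+1) - Q j)))"
      unfolding Nn ub2 by (simp add: mult.assoc)
    thus ?thesis using sumL2[of uu Q n] uu0 uuN Nn by simp
  qed
  have LHS: "(\<Sum>i<n. uu (i+1) * ((G i + G (i+1)) / 2 + (Q (i+2) - Q i) / 2))
      = (\<Sum>j<N. ub j * G j) + (\<Sum>j<N. ub j * (Q (j+1) - Q j))"
    unfolding L L1 L2 by (simp add: sum_distrib_left[symmetric])
  have R: "(\<Sum>i<n. uu (i+1) * (mu / h * (uu i - 2 * uu (Suc i) + uu (i+2)) - (p (Suc i) - p i)))
     = mu / h * (\<Sum>i<n. uu (i+1) * (uu i - 2 * uu (Suc i) + uu (i+2))) - (\<Sum>i<n. uu (i+1) * (p (Suc i) - p i))"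
    by (rule sumlin)
  have R3: "(\<Sum>i<n. uu (i+1) * (uu i - 2 * uu (Suc i) + uu (i+2))) = - Sd N u k"
    using sumL3[of uu n] uu0 uuN Nn unfolding Sd_def uu_def by simp
  have kin1: "(\<Sum>j<N. ub j * G j) = KE N rho u k / 2 - KE N rho u (k - 1) / 2 + dd N rho u k / 2
      - (\<Sum>j<N. (ub j)^2 * (F (Suc j) - F j)) / 2"
  proof -
    have "(\<Sum>j<N. ub j * G j) = (\<Sum>j<N. (r j * (ub j)^2 - r' j * (ub' j)^2 + r' j * (ub j - ub' j)^2
            - (ub j)^2 * (F (Suc j) - F j)) / 2)"
    proof (rule sum.cong)
      fix j assume "j \<in> {..<N}"
      hence m: "r j - r' j = - (F (Suc j) - F j)" using massj by auto
      have "ub j * G j = (r j * (ub j)^2 - r' j * (ub' j)^2 + r' j * (ub j - ub' j)^2 + (ub j)^2 * (r j - r' j)) / 2"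
        unfolding G_def by (simp add: algebra_simps power2_eq_square)
      thus "ub j * G j = (r j * (ub j)^2 - r' j * (ub' j)^2 + r' j * (ub j - ub' j)^2
            - (ub j)^2 * (F (Suc j) - F j)) / 2" using m by (simp add: algebra_simps)
    qed simp
    also have "\<dots> = KE N rho u k / 2 - KE N rho u (k - 1) / 2 + dd N rho u k / 2
      - (\<Sum>j<N. (ub j)^2 * (F (Suc j) - F j)) / 2"
      unfolding KE_def dd_def r_def r'_def ub_def ub'_def
      by (simp add: sum_divide_distrib[symmetric] sum.distrib sum_subtractf)
    finally show ?thesis .
  qed
  have X: "(\<Sum>j<N. ub j * (Q (j+1) - Q j)) - (\<Sum>j<N. (ub j)^2 * (F (Suc j) - F j)) / 2 \<ge> 0"
  proof -
    have a1: "(\<Sum>j<N. ub j * (Q (j+1) - Q j)) = - (\<Sum>j<N. Q (j+1) * (ub (j+1) - ub j))"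
      using abel[of ub Q N] Q0 QN by simp
    have a2: "(\<Sum>j<N. (ub j)^2 * (F (Suc j) - F j)) = - (\<Sum>j<N. F (j+1) * ((ub (j+1))^2 - (ub j)^2))"
      using abel[of "\<lambda>j. (ub j)^2" F N] F0 FN by simp
    have "0 \<le> (\<Sum>j<N. F (j+1) * ((ub (j+1))^2 - (ub j)^2) / 2 - Q (j+1) * (ub (j+1) - ub j))"
    proof (rule sum_nonneg)
      fix j assume j: "j \<in> {..<N}"
      show "0 \<le> F (j+1) * ((ub (j+1))^2 - (ub j)^2) / 2 - Q (j+1) * (ub (j+1) - ub j)"
      proof (cases "Suc j < N")
        case True
        have rj: "r j > 0" "r (Suc j) > 0" using pos True unfolding r_def by auto
        define pp where "pp = ppart (uu (Suc j))"
        define np where "np = npart (uu (Suc j))"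
        have pp: "pp \<ge> 0" unfolding pp_def ppart_def by simp
        have np: "np \<le> 0" unfolding np_def npart_def by simp
        have Fj: "F (j+1) = r j * pp + r (Suc j) * np"
          unfolding F_def UpM_def pp_def np_def r_def uu_def using True by auto
        have Qj: "Q (j+1) = r j * ub j * pp + r (Suc j) * ub (Suc j) * np"
          unfolding Q_def UpQ_def pp_def np_def r_def uu_def ub_def using True by auto
        have "F (j+1) * ((ub (j+1))^2 - (ub j)^2) / 2 - Q (j+1) * (ub (j+1) - ub j)
            = (r j * pp) * (ub (j+1) - ub j)^2 / 2 + (r (Suc j) * (- np)) * (ub (j+1) - ub j)^2 / 2"
          unfolding Fj Qj by (simp add: field_simps power2_eq_square)
        also have "\<dots> \<ge> 0" using rj pp np by (intro add_nonneg_nonneg divide_nonneg_nonneg mult_nonneg_nonneg) auto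
        finally show ?thesis .
      next
        case False
        hence "Suc j = N" using j by auto
        thus ?thesis using FN QN by simp
      qed
    qed
    also have "\<dots> = (\<Sum>j<N. ub j * (Q (j+1) - Q j)) - (\<Sum>j<N. (ub j)^2 * (F (Suc j) - F j)) / 2"
      unfolding a1 a2 by (simp add: sum_subtractf sum_divide_distrib)
    finally show ?thesis .
  qed
  have Pp: "(\<Sum>i<n. uu (i+1) * (p (Suc i) - p i)) \<ge> PE a g N rho k - PE a g N rho (k - 1)"
  proof -
    have "PE a g N rho k - PE a g N rho (k - 1) = (\<Sum>j<N. Pif a g (r j) - Pif a g (r' j))"
      unfolding PE_def r_def r'_def by (simp add: sum_subtractf)
    also have "\<dots> \<le> (\<Sum>j<N. - (dPi a g (r j) * (F (Suc j) - F j)))"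
    proof (rule sum_mono)
      fix j assume "j \<in> {..<N}"
      hence j: "j < N" by simp
      have that: "Pif a g (r' j) \<ge> Pif a g (r j) + dPi a g (r j) * (r' j - r j)"
        using Pi_tangent[of "r' j" "r j" g a] pos pos' j g a unfolding r_def r'_def by auto
      thus "Pif a g (r j) - Pif a g (r' j) \<le> - (dPi a g (r j) * (F (Suc j) - F j))"
      proof -
        have e: "- (dPi a g (r j) * (F (Suc j) - F j)) = dPi a g (r j) * (r j - r' j)" by (simp only: massj[OF j] mult_minus_right)
        show ?thesis unfolding e using that by (simp add: algebra_simps)
      qed
    qed
    also have "\<dots> = (\<Sum>j<N. F (j+1) * (dPi a g (r (j+1)) - dPi a g (r j)))"
      using abel[of "\<lambda>j. dPi a g (r j)" F N] F0 FN by (simp add: sum_negf)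
    also have "\<dots> = (\<Sum>j<n. F (j+1) * (dPi a g (r (j+1)) - dPi a g (r j)))"
      using Nn FN by simp
    also have "\<dots> \<le> (\<Sum>i<n. uu (i+1) * (p (Suc i) - p i))"
    proof (rule sum_mono)
      fix j assume "j \<in> {..<n}"
      hence j: "Suc j < N" using Nn by simp
      have rj: "r j > 0" "r (Suc j) > 0" using pos j unfolding r_def by auto
      have Fj: "F (j+1) = r j * ppart (uu (Suc j)) + r (Suc j) * npart (uu (Suc j))"
        unfolding F_def UpM_def r_def uu_def using j by auto
      show "F (j+1) * (dPi a g (r (j+1)) - dPi a g (r j)) \<le> uu (j+1) * (p (Suc j) - p j)"
        unfolding Fj p_def using node_pressure[OF rj g a] by simp
    qed
    finally show ?thesis by simp
  qed
  have "KE N rho u k / 2 - KE N rho u (k - 1) / 2 + dd N rho u k / 2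
      \<le> - (mu / h * Sd N u k) - (\<Sum>i<n. uu (i+1) * (p (Suc i) - p i))"
    using sumeq LHS R R3 kin1 X by (simp add: algebra_simps)
  thus ?thesis using Pp by linarith
qed

lemma set_integrable_const_Ioo:
  "set_integrable lborel {c<..<d::real} (\<lambda>_. k::real)"
proof -
  have "set_integrable lborel {c..d} (\<lambda>_. k::real)"
    by (rule borel_integrable_atLeastAtMost') (simp add: continuous_on_const)
  thus ?thesis by (rule set_integrable_subset) auto
qed

lemma cell_jensen:
  fixes f :: "real \<Rightarrow> real"
  assumes fi: "set_integrable lborel {c<..<d} f"
    and gi: "set_integrable lborel {c<..<d} (\<lambda>x. \<bar>f x\<bar> powr g)"
    and cd: "c < d" and g: "g \<ge> 1" and fpos: "\<forall>x\<in>{c<..<d}. f x \<ge> 0"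
    and m: "m = (LINT x:{c<..<d}|lborel. f x) / (d - c)" and mpos: "m > 0"
  shows "(d - c) * m powr g \<le> (LINT x:{c<..<d}|lborel. \<bar>f x\<bar> powr g)"
proof -
  define B where "B = g * m powr (g - 1)"
  define A where "A = m powr g - B * m"
  have i1: "set_integrable lborel {c<..<d} (\<lambda>x. B * f x)" using fi by simp
  have i2: "set_integrable lborel {c<..<d} (\<lambda>x. A + B * f x)"
    using i1 set_integrable_const_Ioo by (rule set_integral_add(1)[rotated])
  have "(LINT x:{c<..<d}|lborel. A + B * f x) = A * (d - c) + B * (LINT x:{c<..<d}|lborel. f x)"
    using set_integral_add(2)[OF set_integrable_const_Ioo i1, of A] cd
    by (simp add: set_integral_const)
  also have "\<dots> = (d - c) * m powr g"
    using m cd unfolding A_def by (simp add: field_simps)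
  finally have e: "(LINT x:{c<..<d}|lborel. A + B * f x) = (d - c) * m powr g" .
  have "(LINT x:{c<..<d}|lborel. A + B * f x) \<le> (LINT x:{c<..<d}|lborel. \<bar>f x\<bar> powr g)"
  proof (rule set_integral_mono[OF i2 gi])
    fix x assume "x \<in> {c<..<d}"
    hence fx: "f x \<ge> 0" using fpos by auto
    have "f x powr g \<ge> m powr g + g * m powr (g - 1) * (f x - m)"
      using tangent_powr[OF fx mpos g] .
    thus "A + B * f x \<le> \<bar>f x\<bar> powr g" using fx unfolding A_def B_def by (simp add: algebra_simps)
  qed
  thus ?thesis using e by simp
qed

lemma LBINT_Ioo:
  fixes c d :: real
  assumes "c \<le> d"
  shows "(LBINT x = c..d. f x) = (LINT x:{c<..<d}|lborel. f x)"
  using assms by (simp add: interval_lebesgue_integral_def)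

lemma LBINT_sum:
  fixes phi :: "real \<Rightarrow> real" and h L :: real
  assumes int: "set_integrable lborel {0..L} phi" and h: "h > 0"
  shows "n * h \<le> L \<Longrightarrow> (\<Sum>i<n. LBINT x = real i * h..real (Suc i) * h. phi x) = (LBINT x = 0..real n * h. phi x)"
proof (induction n)
  case 0
  then show ?case by (simp add: interval_lebesgue_integral_def zero_ereal_def einterval_same set_lebesgue_integral_def)
next
  case (Suc n)
  have le: "real n * h \<le> L" using Suc.prems h
    by (smt (verit) mult_right_mono of_nat_Suc of_nat_0_le_iff)
  have ord: "0 \<le> real n * h" "real n * h \<le> real (Suc n) * h" using h by auto
  have ii: "interval_lebesgue_integrable lborel (ereal 0) (ereal (real (Suc n) * h)) phi"
  proof -
    have "set_integrable lborel {0<..<real (Suc n) * h} phi"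
      by (rule set_integrable_subset[OF int]) (use Suc.prems in auto)
    thus ?thesis using ord unfolding interval_lebesgue_integrable_def by simp
  qed
  have "(LBINT x = ereal 0..ereal (real n * h). phi x) + (LBINT x = ereal (real n * h)..ereal (real (Suc n) * h). phi x)
      = (LBINT x = ereal 0..ereal (real (Suc n) * h). phi x)"
    by (rule interval_integral_sum) (use ii ord in \<open>simp add: min_def max_def\<close>)
  thus ?case using Suc.IH[OF le] by (simp add: zero_ereal_def)
qed

lemma init_bound:
  fixes L g :: real and rho0 :: "real \<Rightarrow> real" and N :: nat and r :: "nat \<Rightarrow> real"
  assumes L: "L > 0" and g: "g > 1" and N: "N \<ge> 1"
    and meas: "set_borel_measurable lborel {0..L} rho0"
    and int: "set_integrable lborel {0..L} (\<lambda>x. \<bar>rho0 x\<bar> powr g)"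
    and posr: "\<forall>x\<in>{0<..<L}. rho0 x > 0"
    and r: "\<forall>i<N. r i = (1 / (L / real N)) * (LBINT x = real i * (L / real N)..real (Suc i) * (L / real N). rho0 x)"
    and rpos: "\<forall>i<N. r i > 0"
  shows "(\<Sum>i<N. r i powr g) \<le> (LBINT x = 0..L. \<bar>rho0 x\<bar> powr g) / (L / real N)"
proof -
  define h where "h = L / real N"
  have h: "h > 0" unfolding h_def using L N by simp
  have Nh: "real N * h = L" unfolding h_def using N by simp
  have one: "set_integrable lborel {0..L} (\<lambda>_. 1::real)"
    by (rule borel_integrable_atLeastAtMost') (simp add: continuous_on_const)
  have rint: "set_integrable lborel {0..L} rho0"
  proof (rule set_integrable_bound[OF set_integral_add(1)[OF one int] meas])
    show "AE x in lborel. x \<in> {0..L} \<longrightarrow> norm (rho0 x) \<le> norm (1 + \<bar>rho0 x\<bar> powr g)"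
    proof (intro AE_I2 impI)
      fix x
      have "\<bar>rho0 x\<bar> \<le> 1 + \<bar>rho0 x\<bar> powr g"
      proof (cases "\<bar>rho0 x\<bar> \<le> 1")
        case True thus ?thesis by (smt (verit) powr_ge_zero)
      next
        case False
        hence "\<bar>rho0 x\<bar> powr 1 \<le> \<bar>rho0 x\<bar> powr g" using g by (intro powr_mono) auto
        thus ?thesis using False by simp
      qed
      thus "norm (rho0 x) \<le> norm (1 + \<bar>rho0 x\<bar> powr g)" by simp
    qed
  qed
  have cell: "\<And>i. i < N \<Longrightarrow> h * r i powr g \<le> (LBINT x = real i * h..real (Suc i) * h. \<bar>rho0 x\<bar> powr g)"
  proof -
    fix i assume i: "i < N"
    define c where "c = real i * h"
    define d where "d = real (Suc i) * h"
    have cd: "c < d" "d - c = h" "0 \<le> c" unfolding c_def d_def using h by (auto simp: algebra_simps)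
    have dL: "d \<le> L" unfolding d_def using i h Nh
      by (metis Suc_leI mult_right_mono of_nat_le_iff order_less_imp_le)
    have sub: "{c<..<d} \<subseteq> {0..L}" using cd dL by auto
    have "(d - c) * r i powr g \<le> (LINT x:{c<..<d}|lborel. \<bar>rho0 x\<bar> powr g)"
    proof (rule cell_jensen)
      show "set_integrable lborel {c<..<d} rho0" using set_integrable_subset[OF rint _ sub] by simp
      show "set_integrable lborel {c<..<d} (\<lambda>x. \<bar>rho0 x\<bar> powr g)" using set_integrable_subset[OF int _ sub] by simp
      show "c < d" by fact
      show "1 \<le> g" using g by simp
      show "\<forall>x\<in>{c<..<d}. 0 \<le> rho0 x" using posr sub cd dL by (auto intro: less_imp_le)
      have ri: "r i = (LBINT x = c..d. rho0 x) / h" using r i unfolding c_def d_def h_def by simp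
      show "r i = (LINT x:{c<..<d}|lborel. rho0 x) / (d - c)"
        using ri LBINT_Ioo[of c d rho0] cd by simp
      show "r i > 0" using rpos i by simp
    qed
    hence "h * r i powr g \<le> (LBINT x = c..d. \<bar>rho0 x\<bar> powr g)"
      using cd LBINT_Ioo[of c d "\<lambda>x. \<bar>rho0 x\<bar> powr g"] by simp
    thus "h * r i powr g \<le> (LBINT x = real i * h..real (Suc i) * h. \<bar>rho0 x\<bar> powr g)"
      unfolding c_def d_def .
  qed
  have "h * (\<Sum>i<N. r i powr g) \<le> (\<Sum>i<N. LBINT x = real i * h..real (Suc i) * h. \<bar>rho0 x\<bar> powr g)"
    unfolding sum_distrib_left by (rule sum_mono) (use cell in auto)
  also have "\<dots> = (LBINT x = 0..real N * h. \<bar>rho0 x\<bar> powr g)"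
    by (rule LBINT_sum[OF int h]) (simp add: Nh)
  finally have "h * (\<Sum>i<N. r i powr g) \<le> (LBINT x = 0..L. \<bar>rho0 x\<bar> powr g)" using Nh by simp
  thus ?thesis using h unfolding h_def[symmetric] by (simp add: field_simps)
qed

lemma F_sq_bound:
  fixes x y v :: real
  shows "(x * ppart v + y * npart v)^2 \<le> (x^2 + y^2) * v^2"
proof (cases "v \<ge> 0")
  case True
  hence "(x * ppart v + y * npart v)^2 = x^2 * v^2"
    by (simp add: ppart_def npart_def power_mult_distrib)
  thus ?thesis by (simp add: algebra_simps)
next
  case False
  hence "(x * ppart v + y * npart v)^2 = y^2 * v^2"
    by (simp add: ppart_def npart_def power_mult_distrib)
  thus ?thesis by (simp add: algebra_simps)
qed

lemma step_decomp:
  fixes rho u :: "nat \<Rightarrow> nat \<Rightarrow> real" and k N :: nat and h :: real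
  assumes N: "N \<ge> 1" and h: "h > 0"
    and mass: "\<forall>i<N. (rho k i - rho (k - 1) i) / h + (UpM N rho u k (Suc i) - UpM N rho u k i) / h = 0"
  shows "(\<Sum>i<N - 1. UpM N rho u k (Suc i) * (qmom rho u k i - qmom rho u (k - 1) i))
    = (\<Sum>j<N. rho (k - 1) j * (UpM N rho u k j + UpM N rho u k (Suc j)) * (uhat u k j - uhat u (k - 1) j)) / 2
    + (\<Sum>j<N - 1. (UpM N rho u k (Suc j))^2 * (uhat u k (Suc j) - uhat u k j)) / 2"
proof -
  obtain n where Nn: "N = Suc n" using N by (cases N) auto
  define F where "F = UpM N rho u k"
  define ub where "ub = uhat u k"
  define ub' where "ub' = uhat u (k - 1)"
  define r where "r = rho k"
  define r' where "r' = rho (k - 1)"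
  define G where "G = (\<lambda>j. r j * ub j - r' j * ub' j)"
  have F0: "F 0 = 0" and FN: "F N = 0" unfolding F_def UpM_def using N by auto
  have massj: "\<And>j. j < N \<Longrightarrow> r j - r' j = - (F (Suc j) - F j)"
  proof -
    fix j assume "j < N"
    hence "(r j - r' j) / h + (F (Suc j) - F j) / h = 0" using mass unfolding r_def r'_def F_def by auto
    hence "((r j - r' j) + (F (Suc j) - F j)) / h = 0" by (simp add: add_divide_distrib)
    thus "r j - r' j = - (F (Suc j) - F j)" using h by simp
  qed
  have qd: "\<And>i. qmom rho u k i - qmom rho u (k - 1) i = (G i + G (i+1)) / 2"
    unfolding qmom_def G_def r_def r'_def ub_def ub'_def by (simp add: field_simps)
  have "(\<Sum>i<n. F (i+1) * (qmom rho u k i - qmom rho u (k - 1) i)) = (\<Sum>i<n. F (i+1) * (G i + G (i+1))) / 2"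
    unfolding qd by (simp add: sum_divide_distrib)
  also have "(\<Sum>i<n. F (i+1) * (G i + G (i+1))) = (\<Sum>j<N. (F j + F (j+1)) * G j)"
    using sumL1[of F G n] F0 FN Nn by simp
  also have "\<dots> = (\<Sum>j<N. r' j * (F j + F (Suc j)) * (ub j - ub' j)) + (\<Sum>j<N. - (ub j * ((F (Suc j))^2 - (F j)^2)))"
  proof -
    have "(\<Sum>j<N. (F j + F (j+1)) * G j) = (\<Sum>j<N. r' j * (F j + F (Suc j)) * (ub j - ub' j) + - (ub j * ((F (Suc j))^2 - (F j)^2)))"
    proof (rule sum.cong)
      fix j assume "j \<in> {..<N}"
      hence m: "r j = r' j - (F (Suc j) - F j)" using massj by force
      show "(F j + F (j+1)) * G j = r' j * (F j + F (Suc j)) * (ub j - ub' j) + - (ub j * ((F (Suc j))^2 - (F j)^2))"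
        unfolding G_def m by (simp add: algebra_simps power2_eq_square)
    qed simp
    thus ?thesis by (simp only: sum.distrib)
  qed
  also have "(\<Sum>j<N. - (ub j * ((F (Suc j))^2 - (F j)^2))) = (\<Sum>j<N. (F (j+1))^2 * (ub (j+1) - ub j))"
    using abel[of ub "\<lambda>j. (F j)^2" N] F0 FN by (simp add: sum_negf)
  also have "\<dots> = (\<Sum>j<n. (F (j+1))^2 * (ub (j+1) - ub j))"
    using Nn FN by simp
  finally show ?thesis unfolding F_def ub_def ub'_def r'_def Nn by (simp add: add_divide_distrib)
qed

lemma pow2_le_powr:
  fixes r R g :: real
  assumes "0 < r" "r \<le> R" "g < 2"
  shows "r^2 \<le> R powr (2 - g) * r powr g"
proof -
  have "r^2 = r powr (2 - g) * r powr g" using assms by (simp add: powr_add[symmetric] powr_numeral)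
  also have "\<dots> \<le> R powr (2 - g) * r powr g"
    using assms by (intro mult_right_mono powr_mono2) auto
  finally show ?thesis .
qed

lemma A_bound:
  fixes rho u :: "nat \<Rightarrow> nat \<Rightarrow> real" and k N :: nat and R g :: real
  assumes N: "N \<ge> 1" and g: "g > 1" "g < 2" and R: "R > 0"
    and pos: "\<forall>i<N. rho k i > 0" and pos': "\<forall>i<N. rho (k - 1) i > 0"
    and Rb: "\<forall>i<N. rho k i \<le> R" and Rb': "\<forall>i<N. rho (k - 1) i \<le> R"
    and bc: "u k 0 = 0"
  shows "(\<Sum>j<N. rho (k - 1) j * (UpM N rho u k j + UpM N rho u k (Suc j)) * (uhat u k j - uhat u (k - 1) j))^2
     \<le> 8 * R powr (3 - g) * (real N * Sd N u k) * (\<Sum>j<N. rho k j powr g) * dd N rho u k"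
proof -
  obtain n where Nn: "N = Suc n" using N by (cases N) auto
  define F where "F = UpM N rho u k"
  define r where "r = rho k"
  define r' where "r' = rho (k - 1)"
  define US where "US = real N * Sd N u k"
  define fb where "fb = (\<lambda>m. if 1 \<le> m \<and> m \<le> N - 1 then (r (m - 1))^2 + (r m)^2 else 0)"
  have vb: "\<And>m. m \<le> N \<Longrightarrow> (u k m)^2 \<le> US"
    unfolding US_def Sd_def using tele_sq[of "u k"] bc by simp
  have Fb: "\<And>m. m \<le> N \<Longrightarrow> (F m)^2 \<le> US * fb m"
  proof -
    fix m assume m: "m \<le> N"
    show "(F m)^2 \<le> US * fb m"
    proof (cases "1 \<le> m \<and> m \<le> N - 1")
      case True
      have "(F m)^2 \<le> ((r (m - 1))^2 + (r m)^2) * (u k m)^2"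
        unfolding F_def UpM_def r_def using True F_sq_bound by simp
      also have "\<dots> \<le> ((r (m - 1))^2 + (r m)^2) * US"
        using vb[OF m] by (intro mult_left_mono) auto
      finally show ?thesis unfolding fb_def using True by (simp add: mult.commute)
    next
      case False
      hence "F m = 0" "fb m = 0" unfolding F_def UpM_def fb_def by auto
      thus ?thesis by simp
    qed
  qed
  have US0: "US \<ge> 0" unfolding US_def Sd_def by (simp add: sum_nonneg)
  have sfb: "(\<Sum>j<n. fb (Suc j)) \<le> 2 * (\<Sum>j<N. (r j)^2)"
  proof -
    have "(\<Sum>j<n. fb (Suc j)) = (\<Sum>j<n. (r j)^2) + (\<Sum>j<N - 1. (r (j+1))^2)"
      unfolding fb_def using Nn by (simp add: sum.distrib)
    also have "\<dots> \<le> (\<Sum>j<N. (r j)^2) + (\<Sum>j<N. (r j)^2)"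
      apply (rule add_mono)
      using sum_sub_le[where f="\<lambda>j. (r j)^2" and n=n and N=N] Nn apply simp
      using sum_shift_le[where f="\<lambda>j. (r j)^2" and n=N and N=N] by simp
    finally show ?thesis by simp
  qed
  have sF: "(\<Sum>j<N. (F j)^2) + (\<Sum>j<N. (F (Suc j))^2) \<le> US * (4 * (\<Sum>j<N. (r j)^2))"
  proof -
    have "(\<Sum>j<N. (F j)^2) \<le> (\<Sum>j<N. US * fb j)" by (rule sum_mono) (use Fb in auto)
    also have "\<dots> = US * (\<Sum>j<n. fb (Suc j))"
      unfolding Nn sum.lessThan_Suc_shift by (simp add: fb_def sum_distrib_left)
    finally have 1: "(\<Sum>j<N. (F j)^2) \<le> US * (\<Sum>j<n. fb (Suc j))" .
    have "(\<Sum>j<N. (F (Suc j))^2) \<le> (\<Sum>j<N. US * fb (Suc j))" by (rule sum_mono) (use Fb in auto)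
    also have "\<dots> = US * (\<Sum>j<n. fb (Suc j))"
      unfolding Nn by (simp add: fb_def sum_distrib_left Nn)
    finally have 2: "(\<Sum>j<N. (F (Suc j))^2) \<le> US * (\<Sum>j<n. fb (Suc j))" .
    have "US * (\<Sum>j<n. fb (Suc j)) \<le> US * (2 * (\<Sum>j<N. (r j)^2))"
      using sfb US0 by (rule mult_left_mono)
    thus ?thesis using 1 2 by simp
  qed
  have sr: "(\<Sum>j<N. (r j)^2) \<le> R powr (2 - g) * (\<Sum>j<N. rho k j powr g)"
    unfolding sum_distrib_left r_def by (rule sum_mono) (use pos Rb g pow2_le_powr in auto)
  have sF2: "(\<Sum>j<N. (F j)^2) + (\<Sum>j<N. (F (Suc j))^2) \<le> US * (4 * (R powr (2 - g) * (\<Sum>j<N. rho k j powr g)))"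
  proof -
    have "US * (4 * (\<Sum>j<N. (r j)^2)) \<le> US * (4 * (R powr (2 - g) * (\<Sum>j<N. rho k j powr g)))"
      using sr US0 by (intro mult_left_mono) auto
    thus ?thesis using sF by linarith
  qed
  define D where "D = dd N rho u k"
  have D0: "D \<ge> 0" unfolding D_def dd_def using pos' by (auto intro!: sum_nonneg)
  have c1: "(\<Sum>j<N. r' j * (F j + F (Suc j)) * (uhat u k j - uhat u (k - 1) j))^2
      \<le> (\<Sum>j<N. r' j * (F j + F (Suc j))^2) * D"
  proof -
    have "\<And>j. j \<in> {..<N} \<Longrightarrow> 0 \<le> r' j" using pos' r'_def by (simp add: less_imp_le)
    from wCS[of "{..<N}" r' "\<lambda>j. F j + F (Suc j)" "\<lambda>j. uhat u k j - uhat u (k - 1) j", OF this]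
    show ?thesis unfolding D_def dd_def r'_def by simp
  qed
  have c2: "(\<Sum>j<N. r' j * (F j + F (Suc j))^2) \<le> (\<Sum>j<N. R * (2 * (F j)^2 + 2 * (F (Suc j))^2))"
  proof (rule sum_mono)
    fix j assume "j \<in> {..<N}"
    hence "0 < r' j" "r' j \<le> R" using pos' Rb' r'_def by auto
    moreover have "(F j + F (Suc j))^2 \<le> 2 * (F j)^2 + 2 * (F (Suc j))^2"
      by (smt (verit) zero_le_power2 power2_diff power2_sum)
    ultimately show "r' j * (F j + F (Suc j))^2 \<le> R * (2 * (F j)^2 + 2 * (F (Suc j))^2)"
      by (intro mult_mono) auto
  qed
  also have "(\<Sum>j<N. R * (2 * (F j)^2 + 2 * (F (Suc j))^2)) = 2 * R * ((\<Sum>j<N. (F j)^2) + (\<Sum>j<N. (F (Suc j))^2))"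
    by (simp add: sum_distrib_left sum.distrib algebra_simps)
  also have "\<dots> \<le> 2 * R * (US * (4 * (R powr (2 - g) * (\<Sum>j<N. rho k j powr g))))"
    using sF2 R by (intro mult_left_mono) auto
  also have "\<dots> = 8 * R powr (3 - g) * US * (\<Sum>j<N. rho k j powr g)"
  proof -
    have "R powr (3 - g) = R powr (1 + (2 - g))" by simp
    also have "\<dots> = R powr 1 * R powr (2 - g)" by (rule powr_add)
    finally have RR: "R powr (3 - g) = R * R powr (2 - g)" using R by simp
    show ?thesis unfolding RR by (simp add: algebra_simps)
  qed
  finally have c3: "(\<Sum>j<N. r' j * (F j + F (Suc j))^2) \<le> 8 * R powr (3 - g) * US * (\<Sum>j<N. rho k j powr g)" .
  have "(\<Sum>j<N. r' j * (F j + F (Suc j)) * (uhat u k j - uhat u (k - 1) j))^2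
      \<le> 8 * R powr (3 - g) * US * (\<Sum>j<N. rho k j powr g) * D"
    using c1 mult_right_mono[OF c3 D0] by linarith
  thus ?thesis unfolding F_def r'_def US_def D_def by (simp add: mult.assoc)
qed

lemma sq_sum_le: "((x::real) + y)^2 \<le> 2 * x^2 + 2 * y^2"
  by (smt (verit) zero_le_power2 power2_diff power2_sum)

lemma B_bound:
  fixes rho u :: "nat \<Rightarrow> nat \<Rightarrow> real" and k N :: nat and R :: real
  assumes N: "N \<ge> 1" and R: "R > 0"
    and pos: "\<forall>i<N. rho k i > 0" and Rb: "\<forall>i<N. rho k i \<le> R"
    and bc: "u k 0 = 0"
  shows "(\<Sum>j<N - 1. (UpM N rho u k (Suc j))^2 * (uhat u k (Suc j) - uhat u k j))^2
     \<le> 2 * R^3 * (real N * Sd N u k) * (4 * KE N rho u k + R * Sd N u k) * Sd N u k"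
proof -
  obtain n where Nn: "N = Suc n" using N by (cases N) auto
  define F where "F = UpM N rho u k"
  define r where "r = rho k"
  define v where "v = u k"
  define ub where "ub = uhat u k"
  define S where "S = Sd N u k"
  define US where "US = real N * S"
  define W where "W = (\<lambda>j. (r j + r (Suc j)) * (v (Suc j))^2)"
  define E where "E = KE N rho u k"
  have ubd: "\<And>j. ub j = (v j + v (Suc j)) / 2" unfolding ub_def v_def uhat_def by simp
  have S0: "S \<ge> 0" unfolding S_def Sd_def by (simp add: sum_nonneg)
  have US0: "US \<ge> 0" unfolding US_def using S0 by simp
  have vb: "\<And>m. m \<le> N \<Longrightarrow> (v m)^2 \<le> US"
    unfolding US_def S_def Sd_def v_def using tele_sq[of "u k"] bc by simp
  have rj: "\<And>j. j < n \<Longrightarrow> 0 < r j \<and> r j \<le> R \<and> 0 < r (Suc j) \<and> r (Suc j) \<le> R"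
    using pos Rb Nn unfolding r_def by auto
  have sD: "(\<Sum>j<n. (ub (Suc j) - ub j)^2) \<le> S"
  proof -
    have "(\<Sum>j<n. (ub (Suc j) - ub j)^2) \<le> (\<Sum>j<n. ((v (Suc (Suc j)) - v (Suc j))^2 + (v (Suc j) - v j)^2) / 2)"
    proof (rule sum_mono)
      fix j
      have "ub (Suc j) - ub j = ((v (Suc (Suc j)) - v (Suc j)) + (v (Suc j) - v j)) / 2"
        unfolding ubd by (simp add: field_simps)
      hence "(ub (Suc j) - ub j)^2 = (((v (Suc (Suc j)) - v (Suc j)) + (v (Suc j) - v j)) / 2)^2"
        by (rule arg_cong[where f="\<lambda>x. x^2"])
      hence "(ub (Suc j) - ub j)^2 = ((v (Suc (Suc j)) - v (Suc j)) + (v (Suc j) - v j))^2 / 4"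
        by (simp only: power_divide) simp
      thus "(ub (Suc j) - ub j)^2 \<le> ((v (Suc (Suc j)) - v (Suc j))^2 + (v (Suc j) - v j)^2) / 2"
        using sq_sum_le[of "v (Suc (Suc j)) - v (Suc j)" "v (Suc j) - v j"] by simp
    qed
    also have "\<dots> = ((\<Sum>j<N - 1. (v (Suc (j+1)) - v (j+1))^2) + (\<Sum>j<n. (v (Suc j) - v j)^2)) / 2"
      unfolding sum_divide_distrib[symmetric] sum.distrib[symmetric] using Nn by (simp add: sum.distrib)
    also have "\<dots> \<le> (S + S) / 2"
      apply (intro divide_right_mono add_mono)
      using sum_shift_le[where f="\<lambda>j. (v (Suc j) - v j)^2" and n=N and N=N] unfolding S_def Sd_def v_def apply simp
      using sum_sub_le[where f="\<lambda>j. (v (Suc j) - v j)^2" and n=n and N=N] Nn unfolding S_def Sd_def v_def apply simp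
      by simp
    finally show ?thesis by simp
  qed
  have FW: "\<And>j. j < n \<Longrightarrow> (F (Suc j))^2 \<le> R * W j"
  proof -
    fix j assume j: "j < n"
    have "(F (Suc j))^2 \<le> ((r j)^2 + (r (Suc j))^2) * (v (Suc j))^2"
      unfolding F_def UpM_def r_def v_def using j Nn F_sq_bound by simp
    also have "\<dots> \<le> (R * r j + R * r (Suc j)) * (v (Suc j))^2"
      using rj[OF j] by (intro mult_right_mono add_mono) (auto simp: power2_eq_square intro: mult_right_mono)
    finally show "(F (Suc j))^2 \<le> R * W j" unfolding W_def by (simp add: algebra_simps)
  qed
  have W0: "\<And>j. j < n \<Longrightarrow> W j \<ge> 0" unfolding W_def using rj by (simp add: less_imp_le)
  have WU: "\<And>j. j < n \<Longrightarrow> W j \<le> 2 * R * US"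
  proof -
    fix j assume j: "j < n"
    have "W j \<le> (R + R) * US" unfolding W_def
      using rj[OF j] vb[of "Suc j"] j Nn by (intro mult_mono add_mono) auto
    thus "W j \<le> 2 * R * US" by simp
  qed
  have F4: "(\<Sum>j<n. ((F (Suc j))^2)^2) \<le> 2 * R^3 * US * (\<Sum>j<n. W j)"
  proof -
    have "(\<Sum>j<n. ((F (Suc j))^2)^2) \<le> (\<Sum>j<n. 2 * R^3 * US * W j)"
    proof (rule sum_mono)
      fix j assume "j \<in> {..<n}"
      hence j: "j < n" by simp
      have "((F (Suc j))^2)^2 \<le> (R * W j)^2" using FW[OF j] by (intro power_mono) auto
      also have "\<dots> = R^2 * W j * W j" by (simp add: power2_eq_square)
      also have "\<dots> \<le> R^2 * W j * (2 * R * US)"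
        using WU[OF j] W0[OF j] by (intro mult_left_mono) auto
      finally show "((F (Suc j))^2)^2 \<le> 2 * R^3 * US * W j" by (simp add: power2_eq_square power3_eq_cube algebra_simps)
    qed
    thus ?thesis by (simp add: sum_distrib_left)
  qed
  have sW: "(\<Sum>j<n. W j) \<le> 4 * E + R * S"
  proof -
    have "(\<Sum>j<n. W j) \<le> (\<Sum>j<n. 2 * (r j * (ub j)^2) + 2 * (r (Suc j) * (ub (Suc j))^2)
             + R / 2 * (v (Suc j) - v j)^2 + R / 2 * (v (Suc (Suc j)) - v (Suc j))^2)"
    proof (rule sum_mono)
      fix j assume "j \<in> {..<n}"
      hence j: "j < n" by simp
      have e1: "v (Suc j) = ub j + (v (Suc j) - v j) / 2" unfolding ubd by (simp add: field_simps)
      have e2: "v (Suc j) = ub (Suc j) + (- (v (Suc (Suc j)) - v (Suc j)) / 2)" unfolding ubd by (simp add: field_simps)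
      have b1: "(v (Suc j))^2 \<le> 2 * (ub j)^2 + (v (Suc j) - v j)^2 / 2"
        using sq_sum_le[of "ub j" "(v (Suc j) - v j) / 2"] e1 by (simp add: power_divide)
      have b2: "(v (Suc j))^2 \<le> 2 * (ub (Suc j))^2 + (v (Suc (Suc j)) - v (Suc j))^2 / 2"
      proof -
        have "(v (Suc j))^2 \<le> 2 * (ub (Suc j))^2 + (v (Suc j) - v (Suc (Suc j)))^2 / 2"
          using sq_sum_le[of "ub (Suc j)" "- (v (Suc (Suc j)) - v (Suc j)) / 2"] e2 by (simp add: power_divide)
        moreover have "(v (Suc j) - v (Suc (Suc j)))^2 = (v (Suc (Suc j)) - v (Suc j))^2" by (rule power2_commute)
        ultimately show ?thesis by simp
      qed
      have "r j * (v (Suc j))^2 \<le> r j * (2 * (ub j)^2 + (v (Suc j) - v j)^2 / 2)"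
        using b1 rj[OF j] by (intro mult_left_mono) auto
      also have "\<dots> \<le> 2 * (r j * (ub j)^2) + R / 2 * (v (Suc j) - v j)^2"
        using rj[OF j] by (simp add: algebra_simps mult_right_mono)
      finally have t1: "r j * (v (Suc j))^2 \<le> 2 * (r j * (ub j)^2) + R / 2 * (v (Suc j) - v j)^2" .
      have "r (Suc j) * (v (Suc j))^2 \<le> r (Suc j) * (2 * (ub (Suc j))^2 + (v (Suc (Suc j)) - v (Suc j))^2 / 2)"
        using b2 rj[OF j] by (intro mult_left_mono) auto
      also have "\<dots> \<le> 2 * (r (Suc j) * (ub (Suc j))^2) + R / 2 * (v (Suc (Suc j)) - v (Suc j))^2"
        using rj[OF j] by (simp add: algebra_simps mult_right_mono)
      finally have t2: "r (Suc j) * (v (Suc j))^2 \<le> 2 * (r (Suc j) * (ub (Suc j))^2) + R / 2 * (v (Suc (Suc j)) - v (Suc j))^2" .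
      show "W j \<le> 2 * (r j * (ub j)^2) + 2 * (r (Suc j) * (ub (Suc j))^2)
             + R / 2 * (v (Suc j) - v j)^2 + R / 2 * (v (Suc (Suc j)) - v (Suc j))^2"
        unfolding W_def using t1 t2 by (simp add: algebra_simps)
    qed
    also have "\<dots> = 2 * (\<Sum>j<n. r j * (ub j)^2) + 2 * (\<Sum>j<N - 1. r (j+1) * (ub (j+1))^2)
         + R / 2 * (\<Sum>j<n. (v (Suc j) - v j)^2) + R / 2 * (\<Sum>j<N - 1. (v (Suc (j+1)) - v (j+1))^2)"
      using Nn by (simp add: sum.distrib sum_distrib_left)
    also have "\<dots> \<le> 2 * E + 2 * E + R / 2 * S + R / 2 * S"
    proof (intro add_mono mult_left_mono)
      have nn: "\<And>j. j < N \<Longrightarrow> 0 \<le> r j * (ub j)^2" using pos unfolding r_def by (simp add: less_imp_le)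
      show "(\<Sum>j<n. r j * (ub j)^2) \<le> E"
        using sum_sub_le[where f="\<lambda>j. r j * (ub j)^2" and n=n and N=N] nn Nn unfolding E_def KE_def r_def ub_def by simp
      show "(\<Sum>j<N - 1. r (j+1) * (ub (j+1))^2) \<le> E"
        using sum_shift_le[where f="\<lambda>j. r j * (ub j)^2" and n=N and N=N] nn unfolding E_def KE_def r_def ub_def by simp
      show "(\<Sum>j<n. (v (Suc j) - v j)^2) \<le> S"
        using sum_sub_le[where f="\<lambda>j. (v (Suc j) - v j)^2" and n=n and N=N] Nn unfolding S_def Sd_def v_def by simp
      show "(\<Sum>j<N - 1. (v (Suc (j+1)) - v (j+1))^2) \<le> S"
        using sum_shift_le[where f="\<lambda>j. (v (Suc j) - v j)^2" and n=N and N=N] unfolding S_def Sd_def v_def by simp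
    qed (use R in auto)
    finally show ?thesis by simp
  qed
  have "(\<Sum>j<n. (F (Suc j))^2 * (ub (Suc j) - ub j))^2
      \<le> (\<Sum>j<n. ((F (Suc j))^2)^2) * (\<Sum>j<n. (ub (Suc j) - ub j)^2)"
    by (rule Cauchy_Schwarz_ineq_sum)
  also have "\<dots> \<le> (2 * R^3 * US * (4 * E + R * S)) * S"
  proof (rule mult_mono)
    show "(\<Sum>j<n. ((F (Suc j))^2)^2) \<le> 2 * R^3 * US * (4 * E + R * S)"
    proof -
      have c0: "0 \<le> 2 * R^3 * US" using R US0 by simp
      have "2 * R^3 * US * (\<Sum>j<n. W j) \<le> 2 * R^3 * US * (4 * E + R * S)" by (rule mult_left_mono[OF sW c0])
      thus ?thesis using F4 by linarith
    qed
    show "(\<Sum>j<n. (ub (Suc j) - ub j)^2) \<le> S" by (rule sD)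
    have E0: "E \<ge> 0" unfolding E_def KE_def using pos by (auto intro!: sum_nonneg simp: less_imp_le)
    show "0 \<le> 2 * R^3 * US * (4 * E + R * S)"
      using E0 R US0 S0 by (intro mult_nonneg_nonneg add_nonneg_nonneg) auto
  qed (simp add: sum_nonneg)
  finally show ?thesis unfolding F_def ub_def US_def S_def E_def using Nn by simp
qed

lemma energy_cum:
  fixes rho u :: "nat \<Rightarrow> nat \<Rightarrow> real" and N M :: nat and h mu a g :: real
  assumes N: "N \<ge> 1" and h: "h > 0" and mu: "mu > 0" and a: "a > 0" and g: "g > 1"
    and pos: "\<forall>k\<in>{0..M}. \<forall>i<N. rho k i > 0"
    and bc: "\<forall>k\<in>{1..M}. u k 0 = 0 \<and> u k N = 0"
    and mass: "\<forall>k\<in>{1..M}. \<forall>i<N. (rho k i - rho (k - 1) i) / h + (UpM N rho u k (Suc i) - UpM N rho u k i) / h = 0"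
    and mom: "\<forall>k\<in>{1..M}. \<forall>i<N - 1.
          (qmom rho u k i - qmom rho u (k - 1) i) / h
          + (UpQ N rho u k (i + 2) - UpQ N rho u k i) / (2 * h)
          = mu * (u k i - 2 * u k (Suc i) + u k (i + 2)) / h\<^sup>2
            - (pressure a g (rho k (Suc i)) - pressure a g (rho k i)) / h"
  shows "k \<le> M \<Longrightarrow> KE N rho u k / 2 + PE a g N rho k + mu / h * (\<Sum>l\<in>{1..k}. Sd N u l) + (\<Sum>l\<in>{1..k}. dd N rho u l) / 2
      \<le> KE N rho u 0 / 2 + PE a g N rho 0"
proof (induction k)
  case 0
  then show ?case by simp
next
  case (Suc k)
  have kM: "Suc k \<in> {1..M}" using Suc.prems by simp
  have st: "KE N rho u (Suc k) / 2 + PE a g N rho (Suc k) + mu / h * Sd N u (Suc k) + dd N rho u (Suc k) / 2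
         \<le> KE N rho u (Suc k - 1) / 2 + PE a g N rho (Suc k - 1)"
  proof (rule energy_step[OF N h mu a g])
    show "\<forall>i<N. rho (Suc k) i > 0" using pos Suc.prems by auto
    show "\<forall>i<N. rho (Suc k - 1) i > 0" using pos Suc.prems by auto
    show "u (Suc k) 0 = 0" "u (Suc k) N = 0" using bc kM by auto
    show "\<forall>i<N. (rho (Suc k) i - rho (Suc k - 1) i) / h + (UpM N rho u (Suc k) (Suc i) - UpM N rho u (Suc k) i) / h = 0"
      using mass kM by blast
    show "\<forall>i<N - 1.
          (qmom rho u (Suc k) i - qmom rho u (Suc k - 1) i) / h
          + (UpQ N rho u (Suc k) (i + 2) - UpQ N rho u (Suc k) i) / (2 * h)
          = mu * (u (Suc k) i - 2 * u (Suc k) (Suc i) + u (Suc k) (i + 2)) / h\<^sup>2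
            - (pressure a g (rho (Suc k) (Suc i)) - pressure a g (rho (Suc k) i)) / h"
      using mom kM by blast
  qed
  have IH: "KE N rho u k / 2 + PE a g N rho k + mu / h * (\<Sum>l\<in>{1..k}. Sd N u l) + (\<Sum>l\<in>{1..k}. dd N rho u l) / 2
      \<le> KE N rho u 0 / 2 + PE a g N rho 0" using Suc by simp
  have s1: "(\<Sum>l\<in>{1..Suc k}. Sd N u l) = (\<Sum>l\<in>{1..k}. Sd N u l) + Sd N u (Suc k)" by simp
  have s2: "(\<Sum>l\<in>{1..Suc k}. dd N rho u l) = (\<Sum>l\<in>{1..k}. dd N rho u l) + dd N rho u (Suc k)" by simp
  show ?case using st IH unfolding s1 s2 by (simp add: distrib_left add_divide_distrib)
qed

lemma abs_le_sqrt_of_sq: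
  fixes x c y :: real
  assumes "x^2 \<le> c^2 * y" "0 \<le> c" "0 \<le> y"
  shows "\<bar>x\<bar> \<le> c * sqrt y"
proof -
  have "\<bar>x\<bar> = sqrt (x^2)" by simp
  also have "\<dots> \<le> sqrt (c^2 * y)" by (rule real_sqrt_le_mono[OF assms(1)])
  also have "\<dots> = c * sqrt y" using assms by (simp add: real_sqrt_mult)
  finally show ?thesis .
qed

lemma step_final:
  fixes h R L K C2 S d P E A B T g :: real and N :: nat
  assumes h: "h > 0" and R: "R > 0" and L: "L > 0" and K: "K > 0" and S: "S \<ge> 0" and d: "d \<ge> 0"
    and NL: "real N * h = L" and P: "P \<le> K / h" and P0: "P \<ge> 0"
    and E: "4 * E + R * S \<le> C2 / h" and E0: "4 * E + R * S \<ge> 0"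
    and A: "A^2 \<le> 8 * R powr (3 - g) * (real N * S) * P * d"
    and B: "B^2 \<le> 2 * R^3 * (real N * S) * (4 * E + R * S) * S"
    and T: "T = A / 2 + B / 2"
  shows "\<bar>T\<bar> \<le> (sqrt (8 * L * K) * R powr ((3 - g) / 2) * ((S / sqrt h + sqrt h * d) / 2)
                  + sqrt (2 * L * C2) * R powr (3 / 2) * S) / (2 * h)"
proof -
  have "0 \<le> C2 / h" using E E0 by linarith
  hence C20: "C2 \<ge> 0" using h by (simp add: zero_le_divide_iff)
  have Nh: "real N = L / h" using NL h by (simp add: field_simps)
  have RA: "(R powr ((3 - g) / 2))^2 = R powr (3 - g)"
  proof -
    have "(R powr ((3 - g) / 2))^2 = R powr ((3 - g) / 2 + (3 - g) / 2)" unfolding power2_eq_square powr_add ..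
    moreover have "(3 - g) / 2 + (3 - g) / 2 = 3 - g" by simp
    ultimately show ?thesis by simp
  qed
  have RB: "(R powr (3 / 2))^2 = R^3"
  proof -
    have "(R powr (3 / 2))^2 = R powr (3 / 2 + 3 / 2)" unfolding power2_eq_square powr_add ..
    moreover have "(3::real) / 2 + 3 / 2 = 3" by simp
    ultimately show ?thesis using R by (simp add: powr_numeral)
  qed
  define ca where "ca = sqrt (8 * L * K) * R powr ((3 - g) / 2) / h"
  define cb where "cb = sqrt (2 * L * C2) * R powr (3 / 2) / h"
  have ca0: "ca \<ge> 0" unfolding ca_def using L K h by simp
  have cb0: "cb \<ge> 0" unfolding cb_def using L C20 h by simp
  have "A^2 \<le> 8 * R powr (3 - g) * (L / h * S) * (K / h) * d"
  proof -
    have X0: "0 \<le> 8 * R powr (3 - g) * (real N * S)" using S by simp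
    have "8 * R powr (3 - g) * (real N * S) * P * d \<le> 8 * R powr (3 - g) * (real N * S) * (K / h) * d"
      using P d X0 by (intro mult_right_mono mult_left_mono) auto
    thus ?thesis using A Nh by simp
  qed
  also have "\<dots> = ca^2 * (S * d)"
    unfolding ca_def using L K h RA by (simp add: power_mult_distrib power_divide field_simps power2_eq_square)
  finally have A2: "A^2 \<le> ca^2 * (S * d)" .
  have absA: "\<bar>A\<bar> \<le> ca * sqrt (S * d)" by (rule abs_le_sqrt_of_sq[OF A2 ca0]) (use S d in simp)
  have sq: "sqrt (S * d) \<le> (S / sqrt h + sqrt h * d) / 2"
  proof -
    have "S * d = (S / sqrt h) * (sqrt h * d)" using h by simp
    thus ?thesis using arith_geo_mean_sqrt[of "S / sqrt h" "sqrt h * d"] S d h by simp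
  qed
  have "B^2 \<le> 2 * R^3 * (L / h * S) * (C2 / h) * S"
  proof -
    have "2 * R^3 * (real N * S) \<ge> 0" using R S by simp
    hence "2 * R^3 * (real N * S) * (4 * E + R * S) * S \<le> 2 * R^3 * (real N * S) * (C2 / h) * S"
      using E S by (intro mult_right_mono mult_left_mono) auto
    thus ?thesis using B Nh by simp
  qed
  also have "\<dots> = cb^2 * (S * S)"
    unfolding cb_def using L C20 h RB by (simp add: power_mult_distrib power_divide field_simps power2_eq_square)
  finally have B2: "B^2 \<le> cb^2 * (S * S)" .
  have absB: "\<bar>B\<bar> \<le> cb * S"
    using abs_le_sqrt_of_sq[OF B2 cb0] S by simp
  have "\<bar>T\<bar> \<le> \<bar>A\<bar> / 2 + \<bar>B\<bar> / 2" unfolding T by simp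
  also have "\<dots> \<le> ca * ((S / sqrt h + sqrt h * d) / 2) / 2 + cb * S / 2"
  proof -
    have gen: "\<And>X Z W a b::real. \<bar>a\<bar> \<le> X \<Longrightarrow> \<bar>b\<bar> \<le> W \<Longrightarrow> X \<le> Z \<Longrightarrow> \<bar>a\<bar> / 2 + \<bar>b\<bar> / 2 \<le> Z / 2 + W / 2"
      by linarith
    show ?thesis by (rule gen[OF absA absB mult_left_mono[OF sq ca0]])
  qed
  also have "\<dots> = (sqrt (8 * L * K) * R powr ((3 - g) / 2) * ((S / sqrt h + sqrt h * d) / 2)
                  + sqrt (2 * L * C2) * R powr (3 / 2) * S) / (2 * h)"
    unfolding ca_def cb_def using h by (simp add: field_simps)
  finally show ?thesis .
qed

lemma swapdiv: "(z::real) * (x / y) = x * (z / y)" by (simp add: divide_inverse ac_simps)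

lemma final_alg:
  fixes h K g :: real
  assumes h: "h > 0" and K: "K > 0" and g: "g > 0"
  shows "sqrt h * ((K / h) powr (1 / g)) powr ((3 - g) / 2) = K powr ((3 - g) / (2 * g)) * h powr ((2 * g - 3) / (2 * g))"
    and "h * ((K / h) powr (1 / g)) powr (3 / 2) = K powr (3 / (2 * g)) * h powr ((2 * g - 3) / (2 * g))"
proof -
  have ex1: "1 / g * ((3 - g) / 2) = (3 - g) / (2 * g)" by simp
  have e1: "((K / h) powr (1 / g)) powr ((3 - g) / 2) = K powr ((3 - g) / (2 * g)) / h powr ((3 - g) / (2 * g))"
    unfolding powr_powr ex1 using h K by (simp add: powr_divide)
  have "sqrt h = h powr (1 / 2)" using h by (simp add: powr_half_sqrt)
  moreover have "h powr (1 / 2) / h powr ((3 - g) / (2 * g)) = h powr ((2 * g - 3) / (2 * g))"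
  proof -
    have "(1::real) / 2 - (3 - g) / (2 * g) = (2 * g - 3) / (2 * g)" using g by (simp add: field_simps)
    thus ?thesis by (simp add: powr_diff[symmetric])
  qed
  ultimately show "sqrt h * ((K / h) powr (1 / g)) powr ((3 - g) / 2) = K powr ((3 - g) / (2 * g)) * h powr ((2 * g - 3) / (2 * g))"
    unfolding e1 by (metis swapdiv)
  have ex2: "1 / g * (3 / 2) = 3 / (2 * g)" by simp
  have e2: "((K / h) powr (1 / g)) powr (3 / 2) = K powr (3 / (2 * g)) / h powr (3 / (2 * g))"
    unfolding powr_powr ex2 using h K by (simp add: powr_divide)
  have "h / h powr (3 / (2 * g)) = h powr ((2 * g - 3) / (2 * g))"
  proof -
    have "(1::real) - 3 / (2 * g) = (2 * g - 3) / (2 * g)" using g by (simp add: field_simps)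
    hence "h powr ((2 * g - 3) / (2 * g)) = h powr 1 / h powr (3 / (2 * g))" by (metis powr_diff)
    thus ?thesis using h by simp
  qed
  thus "h * ((K / h) powr (1 / g)) powr (3 / 2) = K powr (3 / (2 * g)) * h powr ((2 * g - 3) / (2 * g))"
    unfolding e2 by (metis swapdiv)
qed

lemma le_one_plus_powr:
  fixes x g :: real
  assumes "0 \<le> x" "g \<ge> 1"
  shows "x \<le> 1 + x powr g"
proof (cases "x \<le> 1")
  case True thus ?thesis by (smt (verit) powr_ge_zero)
next
  case False
  hence "x powr 1 \<le> x powr g" using assms by (intro powr_mono) auto
  thus ?thesis using False by simp
qed

lemma sum_alg:
  fixes s h XA XB C0 mu :: real
  assumes s: "s > 0" and h: "h = s * s" and mu: "mu > 0"
  shows "h * h * (((XA / (2 * s) + XB) / (2 * h)) * (C0 / mu) + (XA * s / (4 * h)) * (2 * C0 / h))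
       = (s * XA) * ((C0 / mu + 2 * C0) / 4) + (h * XB) * (C0 / (2 * mu))"
  unfolding h using s mu by (simp add: field_simps)

lemma Rh_bound:
  fixes K h g :: real
  assumes K: "K > 0" and h: "h > 0" "h < 1" and g: "g > 1"
  shows "(K / h) powr (1 / g) * h \<le> K powr (1 / g)"
proof -
  have "(K / h) powr (1 / g) * h = K powr (1 / g) * (h / h powr (1 / g))"
    using K h by (simp add: powr_divide)
  also have "h / h powr (1 / g) = h powr (1 - 1 / g)"
    using h by (simp add: powr_diff)
  also have "h powr (1 - 1 / g) \<le> 1" using h g by (intro powr_le1) auto
  hence "K powr (1 / g) * h powr (1 - 1 / g) \<le> K powr (1 / g) * 1"
    by (intro mult_left_mono) auto
  finally show ?thesis by simp
qed

lemma add_half_mono: "(x::real) \<le> X \<Longrightarrow> y \<le> Y \<Longrightarrow> x / 2 + y \<le> X / 2 + Y" by linarith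

theorem lemma4p4:
  fixes L T mu a gam :: real and rho0 u0 :: "real \<Rightarrow> real"
  assumes "L > 0" "T > 0" "mu > 0" "a > 0"
    and "3 / 2 < gam" "gam < 2"
    and "set_borel_measurable lborel {0..L} rho0"
    and "set_integrable lborel {0..L} (\<lambda>x. \<bar>rho0 x\<bar> powr gam)"
    and "\<forall>x\<in>{0<..<L}. rho0 x > 0"
    and "\<exists>B. \<forall>x\<in>{0..L}. \<bar>u0 x\<bar> \<le> B"
  shows "\<exists>C > 0. \<forall>N M rho u. N \<ge> 1 \<and> M \<ge> 1 \<and> L / real N = T / real M \<and> L / real N < 1
           \<and> numsol L T mu a gam rho0 u0 N M rho u \<longrightarrow>
           (\<forall>m\<in>{1..M}. \<bar>E1 (T / real M) (L / real N) N rho u m\<bar>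
                 \<le> C * (L / real N) powr ((2 * gam - 3) / (2 * gam)))"
proof -
  note L = assms(1) and mu = assms(3) and a = assms(4) and g32 = assms(5) and g2 = assms(6)
  have g1: "gam > 1" using g32 by simp
  from assms(10) obtain B0 where B0: "\<forall>x\<in>{0..L}. \<bar>u0 x\<bar> \<le> B0" by blast
  have B00: "0 \<le> B0" using B0 L by (metis abs_ge_zero atLeastAtMost_iff order_trans order_refl less_imp_le)
  define I where "I = (LBINT x = 0..L. \<bar>rho0 x\<bar> powr gam)"
  define C0 where "C0 = B0^2 / 2 * (L + \<bar>I\<bar>) + a / (gam - 1) * \<bar>I\<bar> + 1"
  define K where "K = (gam - 1) * C0 / a"
  define C2 where "C2 = 8 * C0 + K powr (1 / gam) * C0 / mu"
  define cA where "cA = sqrt (8 * L * K) * ((C0 / mu + 2 * C0) / 4)"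
  define cB where "cB = sqrt (2 * L * C2) * (C0 / (2 * mu))"
  define al where "al = (2 * gam - 3) / (2 * gam)"
  define C where "C = cA * K powr ((3 - gam) / (2 * gam)) + cB * K powr (3 / (2 * gam)) + 1"
  have C01: "C0 \<ge> 1" unfolding C0_def using L a g1 by (auto intro!: add_nonneg_nonneg mult_nonneg_nonneg)
  have K0: "K > 0" unfolding K_def using C01 a g1 by simp
  have C20: "C2 > 0" unfolding C2_def using C01 mu by (auto intro!: add_pos_nonneg)
  have cA0: "cA \<ge> 0" unfolding cA_def using L K0 C01 mu by auto
  have cB0: "cB \<ge> 0" unfolding cB_def using L C20 C01 mu by auto
  have Cpos: "C > 0" unfolding C_def using cA0 cB0 by (auto intro!: add_nonneg_pos)
  show ?thesis
  proof (intro exI[of _ C] conjI allI impI ballI)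
    show "C > 0" by (rule Cpos)
    fix N M :: nat and rho u :: "nat \<Rightarrow> nat \<Rightarrow> real" and m :: nat
    assume H: "N \<ge> 1 \<and> M \<ge> 1 \<and> L / real N = T / real M \<and> L / real N < 1 \<and> numsol L T mu a gam rho0 u0 N M rho u"
      and mM: "m \<in> {1..M}"
    define h where "h = L / real N"
    have N1: "N \<ge> 1" and M1: "M \<ge> 1" using H by auto
    have h0: "h > 0" unfolding h_def using L N1 by simp
    have h1: "h < 1" unfolding h_def using H by blast
    have dt: "T / real M = h" unfolding h_def using H by simp
    have NL: "real N * h = L" unfolding h_def using N1 by simp
    have ns: "numsol L T mu a gam rho0 u0 N M rho u" using H by simp
    have init_r: "\<forall>i<N. rho 0 i = (1 / (L / real N)) * (LBINT x = real i * (L / real N)..real (Suc i) * (L / real N). rho0 x)"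
      using ns unfolding numsol_def Let_def by blast
    have init_u: "\<forall>j\<le>N. u 0 j = u0 (real j * h)"
      using ns unfolding numsol_def Let_def h_def by blast
    have bc: "\<forall>k\<in>{1..M}. u k 0 = 0 \<and> u k N = 0"
      using ns unfolding numsol_def Let_def by blast
    have pos: "\<forall>k\<in>{0..M}. \<forall>i<N. rho k i > 0"
      using ns unfolding numsol_def Let_def by blast
    have mass: "\<forall>k\<in>{1..M}. \<forall>i<N. (rho k i - rho (k - 1) i) / h + (UpM N rho u k (Suc i) - UpM N rho u k i) / h = 0"
      using ns unfolding numsol_def Let_def dt h_def[symmetric] by blast
    have mom: "\<forall>k\<in>{1..M}. \<forall>i<N - 1.
          (qmom rho u k i - qmom rho u (k - 1) i) / h
          + (UpQ N rho u k (i + 2) - UpQ N rho u k i) / (2 * h)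
          = mu * (u k i - 2 * u k (Suc i) + u k (i + 2)) / h\<^sup>2
            - (pressure a gam (rho k (Suc i)) - pressure a gam (rho k i)) / h"
      using ns unfolding numsol_def Let_def dt h_def[symmetric] by blast
    have cum: "\<And>k. k \<le> M \<Longrightarrow> KE N rho u k / 2 + PE a gam N rho k + mu / h * (\<Sum>l\<in>{1..k}. Sd N u l) + (\<Sum>l\<in>{1..k}. dd N rho u l) / 2
      \<le> KE N rho u 0 / 2 + PE a gam N rho 0"
      by (rule energy_cum[OF N1 h0 mu a g1 pos bc mass mom])
    have PEeq: "\<And>k. PE a gam N rho k = a / (gam - 1) * (\<Sum>j<N. rho k j powr gam)"
      unfolding PE_def Pif_def by (simp add: sum_distrib_left)
    have P00: "(\<Sum>j<N. rho 0 j powr gam) \<le> I / h"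
      using init_bound[OF L g1 N1 assms(7) assms(8) assms(9) init_r] pos unfolding I_def h_def by auto
    have P00': "(\<Sum>j<N. rho 0 j powr gam) \<le> \<bar>I\<bar> / h"
    proof -
      have "I / h \<le> \<bar>I\<bar> / h" using h0 by (intro divide_right_mono) auto
      thus ?thesis using P00 by linarith
    qed
    have e0: "KE N rho u 0 / 2 + PE a gam N rho 0 \<le> C0 / h"
    proof -
      have ub: "\<And>j. j < N \<Longrightarrow> (uhat u 0 j)^2 \<le> B0^2"
      proof -
        fix j assume j: "j < N"
        have "\<And>i. i \<le> N \<Longrightarrow> \<bar>u 0 i\<bar> \<le> B0"
        proof -
          fix i assume i: "i \<le> N"
          have "real i * h \<le> L" using i NL h0 by (metis mult_right_mono of_nat_le_iff less_imp_le)
          moreover have "0 \<le> real i * h" using h0 by simp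
          ultimately show "\<bar>u 0 i\<bar> \<le> B0" using init_u i B0 by auto
        qed
        hence "\<bar>u 0 j\<bar> \<le> B0" "\<bar>u 0 (Suc j)\<bar> \<le> B0" using j by auto
        hence "\<bar>uhat u 0 j\<bar> \<le> B0" unfolding uhat_def by simp
        thus "(uhat u 0 j)^2 \<le> B0^2" by (metis abs_ge_zero power2_abs power_mono)
      qed
      have "(\<Sum>j<N. rho 0 j) \<le> (\<Sum>j<N. 1 + rho 0 j powr gam)"
      proof (rule sum_mono)
        fix j assume "j \<in> {..<N}"
        hence "rho 0 j > 0" using pos by auto
        thus "rho 0 j \<le> 1 + rho 0 j powr gam" using g1 by (intro le_one_plus_powr) auto
      qed
      also have "\<dots> = real N + (\<Sum>j<N. rho 0 j powr gam)" by (simp add: sum.distrib)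
      also have "\<dots> \<le> L / h + \<bar>I\<bar> / h"
      proof -
        have "real N = L / h" using NL h0 by (simp add: field_simps)
        thus ?thesis using P00' by linarith
      qed
      finally have s1: "(\<Sum>j<N. rho 0 j) \<le> (L + \<bar>I\<bar>) / h" by (simp add: add_divide_distrib)
      have "KE N rho u 0 \<le> (\<Sum>j<N. rho 0 j * B0^2)"
        unfolding KE_def by (rule sum_mono) (use ub pos in \<open>auto intro: mult_left_mono\<close>)
      also have "\<dots> = (\<Sum>j<N. rho 0 j) * B0^2" by (rule sum_distrib_right[symmetric])
      also have "\<dots> \<le> ((L + \<bar>I\<bar>) / h) * B0^2" using s1 by (rule mult_right_mono) simp
      finally have KE0: "KE N rho u 0 \<le> B0^2 * ((L + \<bar>I\<bar>) / h)" by (simp add: mult.commute)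
      have PE0: "PE a gam N rho 0 \<le> a / (gam - 1) * (\<bar>I\<bar> / h)"
        unfolding PEeq using P00' a g1 by (intro mult_left_mono) auto
      have "KE N rho u 0 / 2 + PE a gam N rho 0 \<le> B0^2 * ((L + \<bar>I\<bar>) / h) / 2 + a / (gam - 1) * (\<bar>I\<bar> / h)"
        by (rule add_half_mono[OF KE0 PE0])
      also have "\<dots> = (B0^2 / 2 * (L + \<bar>I\<bar>) + a / (gam - 1) * \<bar>I\<bar>) / h" using h0 g1 by (simp add: field_simps)
      also have "\<dots> \<le> C0 / h" unfolding C0_def using h0 by (intro divide_right_mono) auto
      finally show ?thesis .
    qed
    have KEnn: "\<And>k. k \<le> M \<Longrightarrow> KE N rho u k \<ge> 0"
      unfolding KE_def using pos by (auto intro!: sum_nonneg mult_nonneg_nonneg simp: less_imp_le)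
    have PEnn: "\<And>k. PE a gam N rho k \<ge> 0"
    proof -
      fix k
      have "0 \<le> (\<Sum>j<N. rho k j powr gam)" by (auto intro: sum_nonneg)
      thus "PE a gam N rho k \<ge> 0" unfolding PEeq using a g1 by simp
    qed
    have Snn: "\<And>k. Sd N u k \<ge> 0" unfolding Sd_def by (auto intro!: sum_nonneg)
    have dnn: "\<And>k. k \<in> {1..M} \<Longrightarrow> dd N rho u k \<ge> 0"
      unfolding dd_def using pos by (auto intro!: sum_nonneg mult_nonneg_nonneg simp: less_imp_le)
    have SsumM: "(\<Sum>l\<in>{1..M}. Sd N u l) \<ge> 0" using Snn by (auto intro: sum_nonneg)
    have dsumM: "(\<Sum>l\<in>{1..M}. dd N rho u l) \<ge> 0" using dnn by (auto intro: sum_nonneg)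
    have cumM: "KE N rho u M / 2 + PE a gam N rho M + mu / h * (\<Sum>l\<in>{1..M}. Sd N u l) + (\<Sum>l\<in>{1..M}. dd N rho u l) / 2 \<le> C0 / h"
      using cum[of M] e0 by simp
    have Ssum: "(\<Sum>l\<in>{1..M}. Sd N u l) \<le> C0 / mu"
    proof -
      have "mu / h * (\<Sum>l\<in>{1..M}. Sd N u l) \<le> C0 / h" using cumM KEnn[of M] PEnn[of M] dsumM by simp
      hence "h * (mu / h * (\<Sum>l\<in>{1..M}. Sd N u l)) \<le> h * (C0 / h)" using h0 by (intro mult_left_mono) auto
      hence "mu * (\<Sum>l\<in>{1..M}. Sd N u l) \<le> C0" using h0 by (simp add: field_simps)
      thus ?thesis using mu by (simp add: field_simps)
    qed
    have dsum: "(\<Sum>l\<in>{1..M}. dd N rho u l) \<le> 2 * C0 / h"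
    proof -
      have "mu / h * (\<Sum>l\<in>{1..M}. Sd N u l) \<ge> 0" using mu h0 SsumM by simp
      hence "(\<Sum>l\<in>{1..M}. dd N rho u l) \<le> 2 * (C0 / h)" using cumM KEnn[of M] PEnn[of M] by linarith
      thus ?thesis by simp
    qed
    have Sk: "\<And>k. k \<in> {1..M} \<Longrightarrow> Sd N u k \<le> C0 / mu"
    proof -
      fix k assume "k \<in> {1..M}"
      hence "Sd N u k \<le> (\<Sum>l\<in>{1..M}. Sd N u l)" using Snn by (intro member_le_sum) auto
      thus "Sd N u k \<le> C0 / mu" using Ssum by linarith
    qed
    have ek: "\<And>k. k \<le> M \<Longrightarrow> KE N rho u k / 2 + PE a gam N rho k \<le> C0 / h"
    proof -
      fix k assume k: "k \<le> M"
      have "(\<Sum>l\<in>{1..k}. Sd N u l) \<ge> 0" using Snn by (auto intro: sum_nonneg)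
      moreover have "(\<Sum>l\<in>{1..k}. dd N rho u l) \<ge> 0" using dnn k by (auto intro: sum_nonneg)
      ultimately show "KE N rho u k / 2 + PE a gam N rho k \<le> C0 / h"
      proof -
        assume "(\<Sum>l\<in>{1..k}. Sd N u l) \<ge> 0" "(\<Sum>l\<in>{1..k}. dd N rho u l) \<ge> 0"
        moreover have "mu / h * (\<Sum>l\<in>{1..k}. Sd N u l) \<ge> 0" using mu h0 calculation(1) by simp
        ultimately show ?thesis using cum[OF k] e0 by linarith
      qed
    qed
    have Pk: "\<And>k. k \<le> M \<Longrightarrow> (\<Sum>j<N. rho k j powr gam) \<le> K / h"
    proof -
      fix k assume k: "k \<le> M"
      have "a / (gam - 1) * (\<Sum>j<N. rho k j powr gam) \<le> C0 / h" using ek[OF k] KEnn[OF k] unfolding PEeq by linarith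
      hence "(gam - 1) / a * (a / (gam - 1) * (\<Sum>j<N. rho k j powr gam)) \<le> (gam - 1) / a * (C0 / h)"
        using a g1 by (intro mult_left_mono) auto
      moreover have "(gam - 1) / a * (a / (gam - 1) * (\<Sum>j<N. rho k j powr gam)) = (\<Sum>j<N. rho k j powr gam)"
        using a g1 by simp
      moreover have "(gam - 1) / a * (C0 / h) = K / h" unfolding K_def by simp
      ultimately show "(\<Sum>j<N. rho k j powr gam) \<le> K / h" by simp
    qed
    have KEk: "\<And>k. k \<le> M \<Longrightarrow> KE N rho u k \<le> 2 * C0 / h"
    proof -
      fix k assume k: "k \<le> M"
      have "KE N rho u k \<le> 2 * (C0 / h)" using ek[OF k] PEnn[of k] by linarith
      thus "KE N rho u k \<le> 2 * C0 / h" by simp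
    qed
    define R where "R = (K / h) powr (1 / gam)"
    have R0: "R > 0" unfolding R_def using K0 h0 by simp
    have Rb: "\<And>k i. k \<le> M \<Longrightarrow> i < N \<Longrightarrow> rho k i \<le> R"
    proof -
      fix k i assume k: "k \<le> M" and i: "i < N"
      have ri: "rho k i > 0" using pos k i by auto
      have "rho k i powr gam \<le> (\<Sum>j<N. rho k j powr gam)"
        using member_le_sum[of i "{..<N}" "\<lambda>j. rho k j powr gam"] i by simp
      also have "\<dots> \<le> K / h" using Pk[OF k] .
      finally have "(rho k i powr gam) powr (1 / gam) \<le> (K / h) powr (1 / gam)"
        using g1 by (intro powr_mono2) auto
      thus "rho k i \<le> R" unfolding R_def using ri g1 by (simp add: powr_powr)
    qed
    have Rh: "R * h \<le> K powr (1 / gam)" unfolding R_def by (rule Rh_bound[OF K0 h0 h1 g1])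
    define TT where "TT = (\<lambda>k. \<Sum>i<N - 1. UpM N rho u k (Suc i) * (qmom rho u k i - qmom rho u (k - 1) i))"
    define XA where "XA = sqrt (8 * L * K) * R powr ((3 - gam) / 2)"
    define XB where "XB = sqrt (2 * L * C2) * R powr (3 / 2)"
    have XA0: "XA \<ge> 0" unfolding XA_def using L K0 by simp
    have XB0: "XB \<ge> 0" unfolding XB_def using L C20 by simp
    have Tk: "\<And>k. k \<in> {1..M} \<Longrightarrow> \<bar>TT k\<bar> \<le> (XA * ((Sd N u k / sqrt h + sqrt h * dd N rho u k) / 2) + XB * Sd N u k) / (2 * h)"
    proof -
      fix k assume k: "k \<in> {1..M}"
      have kM: "k \<le> M" "k - 1 \<le> M" using k by auto
      have posk: "\<forall>i<N. rho k i > 0" "\<forall>i<N. rho (k - 1) i > 0" using pos k by auto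
      have Rbk: "\<forall>i<N. rho k i \<le> R" "\<forall>i<N. rho (k - 1) i \<le> R" using Rb kM by auto
      have massk: "\<forall>i<N. (rho k i - rho (k - 1) i) / h + (UpM N rho u k (Suc i) - UpM N rho u k i) / h = 0"
        using mass k by blast
      have bck: "u k 0 = 0" using bc k by blast
      have E: "4 * KE N rho u k + R * Sd N u k \<le> C2 / h"
      proof -
        have "R * Sd N u k \<le> R * (C0 / mu)" using Sk[OF k] R0 by (intro mult_left_mono) auto
        also have "\<dots> = (R * h) * C0 / mu / h" using h0 by (simp add: field_simps)
        also have "\<dots> \<le> K powr (1 / gam) * C0 / mu / h"
          using Rh C01 mu h0 by (intro divide_right_mono mult_right_mono) auto
        finally have "R * Sd N u k \<le> K powr (1 / gam) * C0 / mu / h" .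
        moreover have "4 * KE N rho u k \<le> 8 * C0 / h" using KEk[OF kM(1)] by simp
        ultimately show ?thesis unfolding C2_def by (simp add: add_divide_distrib)
      qed
      show "\<bar>TT k\<bar> \<le> (XA * ((Sd N u k / sqrt h + sqrt h * dd N rho u k) / 2) + XB * Sd N u k) / (2 * h)"
        unfolding XA_def XB_def
      proof (rule step_final[OF h0 R0 L K0 Snn dnn[OF k] NL Pk[OF kM(1)] _ E _
               A_bound[where rho=rho and u=u and k=k and N=N and R=R and g=gam, OF N1 g1 g2 R0 posk Rbk bck]
               B_bound[where rho=rho and u=u and k=k and N=N and R=R, OF N1 R0 posk(1) Rbk(1) bck]])
        show "0 \<le> (\<Sum>j<N. rho k j powr gam)" by (auto intro: sum_nonneg)
        show "0 \<le> 4 * KE N rho u k + R * Sd N u k" using KEnn[OF kM(1)] R0 Snn[of k] by simp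
        show "TT k = (\<Sum>j<N. rho (k - 1) j * (UpM N rho u k j + UpM N rho u k (Suc j)) * (uhat u k j - uhat u (k - 1) j)) / 2
          + (\<Sum>j<N - 1. (UpM N rho u k (Suc j))^2 * (uhat u k (Suc j) - uhat u k j)) / 2"
          unfolding TT_def by (rule step_decomp[OF N1 h0 massk])
      qed
    qed
    define s where "s = sqrt h"
    have s0: "s > 0" unfolding s_def using h0 by simp
    have hs: "h = s * s" unfolding s_def using h0 by simp
    define al1 where "al1 = (XA / (2 * s) + XB) / (2 * h)"
    define al2 where "al2 = XA * s / (4 * h)"
    have al10: "al1 \<ge> 0" unfolding al1_def using XA0 XB0 s0 h0 by simp
    have al20: "al2 \<ge> 0" unfolding al2_def using XA0 s0 h0 by simp
    have Tk2: "\<And>k. k \<in> {1..M} \<Longrightarrow> \<bar>TT k\<bar> \<le> al1 * Sd N u k + al2 * dd N rho u k"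
    proof -
      fix k assume k: "k \<in> {1..M}"
      have "(XA * ((Sd N u k / sqrt h + sqrt h * dd N rho u k) / 2) + XB * Sd N u k) / (2 * h)
          = al1 * Sd N u k + al2 * dd N rho u k"
        unfolding al1_def al2_def s_def[symmetric] using s0 h0 by (simp add: field_simps)
      thus "\<bar>TT k\<bar> \<le> al1 * Sd N u k + al2 * dd N rho u k" using Tk[OF k] by simp
    qed
    have "\<bar>E1 (T / real M) (L / real N) N rho u m\<bar> = h * h * \<bar>\<Sum>k\<in>{1..m}. TT k\<bar>"
      unfolding E1_def TT_def dt h_def[symmetric] using h0 by (simp add: abs_mult)
    also have "\<bar>\<Sum>k\<in>{1..m}. TT k\<bar> \<le> (\<Sum>k\<in>{1..m}. \<bar>TT k\<bar>)" by (rule sum_abs)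
    also have "\<dots> \<le> (\<Sum>k\<in>{1..M}. \<bar>TT k\<bar>)" using mM by (intro sum_mono2) auto
    also have "\<dots> \<le> (\<Sum>k\<in>{1..M}. al1 * Sd N u k + al2 * dd N rho u k)" by (rule sum_mono) (rule Tk2)
    also have "\<dots> = al1 * (\<Sum>k\<in>{1..M}. Sd N u k) + al2 * (\<Sum>k\<in>{1..M}. dd N rho u k)"
      by (simp add: sum.distrib sum_distrib_left)
    also have "\<dots> \<le> al1 * (C0 / mu) + al2 * (2 * C0 / h)"
      using Ssum dsum al10 al20 by (intro add_mono mult_left_mono) auto
    finally have "\<bar>E1 (T / real M) (L / real N) N rho u m\<bar> \<le> h * h * (al1 * (C0 / mu) + al2 * (2 * C0 / h))"
      using h0 by (simp add: mult_left_mono)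
    also have "h * h * (al1 * (C0 / mu) + al2 * (2 * C0 / h)) = (s * XA) * ((C0 / mu + 2 * C0) / 4) + (h * XB) * (C0 / (2 * mu))"
      unfolding al1_def al2_def by (rule sum_alg[OF s0 hs mu])
    also have "\<dots> = cA * (sqrt h * R powr ((3 - gam) / 2)) + cB * (h * R powr (3 / 2))"
      unfolding XA_def XB_def cA_def cB_def s_def by (simp add: algebra_simps)
    also have "\<dots> = cA * (K powr ((3 - gam) / (2 * gam)) * h powr ((2 * gam - 3) / (2 * gam)))
                 + cB * (K powr (3 / (2 * gam)) * h powr ((2 * gam - 3) / (2 * gam)))"
      unfolding R_def using final_alg[OF h0 K0, of gam] g1 by simp
    also have "\<dots> \<le> C * h powr ((2 * gam - 3) / (2 * gam))"
      unfolding C_def by (simp add: algebra_simps)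
    finally show "\<bar>E1 (T / real M) (L / real N) N rho u m\<bar> \<le> C * (L / real N) powr ((2 * gam - 3) / (2 * gam))"
      unfolding h_def .
  qed
qed

end
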